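(* Let $T\ge 1$, $n\ge 2$, $d\ge1$, $\boldsymbol\mu\in\mathbb{R}^d$, $\boldsymbol\Sigma\in\mathbb{R}^{d\times d}$ positive definite, $\mathbf{z}^*\in\mathbb{R}^d$ and $\tau\in\{1,\dots,T\}$. Data consist of batches $D_1,\dots,D_T$ of $n$ points $\mathbf{X}_{t,k}\in\mathbb{R}^d$ each. Under $\mathbf{H_0}$ all $nT$ points are i.i.d. $\mathcal{N}(\boldsymbol\mu,\boldsymbol\Sigma)$; under $\mathbf{H_1^\tau}$ they are generated the same way and then the $J$-th point of $D_\tau$ is replaced by $\mathbf{z}^*$, with $J$ uniform on $\{1,\dots,n\}$ independent of the data. Let $\hat{\boldsymbol\mu}_t=\frac{1}{nt}\sum_{j=1}^t\sum_{k=1}^n\mathbf{X}_{j,k}$ for $t=1,\dots,T$. Then \[ \frac{p(\hat{\boldsymbol\mu}_1,\dots,\hat{\boldsymbol\mu}_T\mid\mathbf{H_1^\tau})}{p(\hat{\boldsymbol\mu}_1,\dots,\hat{\boldsymbol\mu}_T\mid\mathbf{H_0})}=\frac{p(\hat{\boldsymbol\mu}_\tau\mid\hat{\boldsymbol\mu}_{\tau-1},\mathbf{H_1^\tau})}{p(\hat{\boldsymbol\mu}_\tau\mid\hat{\boldsymbol\mu}_{\tau-1},\mathbf{H_0})}, \] where $p(\cdot\mid\mathbf{H})$ denotes joint density under hypothesis $\mathbf{H}$, $p(\hat{\boldsymbol\mu}_\tau\mid\hat{\boldsymbol\mu}_{\tau-1},\mathbf{H})$ the conditional density of $\hat{\boldsymbol\mu}_\tau$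 given $\hat{\boldsymbol\mu}_{\tau-1}$, and for $\tau=1$ the conditional density is understood as the marginal density of $\hat{\boldsymbol\mu}_1$. *)

theory Defs
  imports "HOL-Probability.Probability"
begin

definition pos_def_mat :: "real^'d^'d \<Rightarrow> bool" where
  "pos_def_mat S \<longleftrightarrow> transpose S = S \<and> (\<forall>x::real^'d. x \<noteq> 0 \<longrightarrow> 0 < x \<bullet> (S *v x))"

definition mvn_density :: "real^'d \<Rightarrow> real^'d^'d \<Rightarrow> real^'d \<Rightarrow> real" where
  "mvn_density mu S x =
     exp (- (1/2) * ((x - mu) \<bullet> (matrix_inv S *v (x - mu))))
     / sqrt ((2 * pi) ^ CARD('d) * det S)"

definition data_H0 :: "nat \<Rightarrow> nat \<Rightarrow> real^'d \<Rightarrow> real^'d^'d \<Rightarrow> (nat \<times> nat \<Rightarrow> real^'d) measure" where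
  "data_H0 n T mu S =
     PiM ({1..T} \<times> {1..n}) (\<lambda>_. density lborel (\<lambda>x. ennreal (mvn_density mu S x)))"

definition data_H1 :: "nat \<Rightarrow> nat \<Rightarrow> real^'d \<Rightarrow> real^'d^'d \<Rightarrow> real^'d \<Rightarrow> nat
                       \<Rightarrow> (nat \<times> nat \<Rightarrow> real^'d) measure" where
  "data_H1 n T mu S z tau =
     distr (data_H0 n T mu S \<Otimes>\<^sub>M uniform_measure (count_space UNIV) {1..n})
           (PiM ({1..T} \<times> {1..n}) (\<lambda>_. lborel))
           (\<lambda>(X, j). X((tau, j) := z))"

definition muhat :: "nat \<Rightarrow> (nat \<times> nat \<Rightarrow> real^'d) \<Rightarrow> nat \<Rightarrow> real^'d" where
  "muhat n X t = (1 / (real n * real t)) *\<^sub>R (\<Sum>j\<in>{1..t}. \<Sum>k\<in>{1..n}. X (j, k))"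

definition muhat_vec :: "nat \<Rightarrow> nat \<Rightarrow> (nat \<times> nat \<Rightarrow> real^'d) \<Rightarrow> (nat \<Rightarrow> real^'d)" where
  "muhat_vec n T X = restrict (muhat n X) {1..T}"

definition cond_density ::
  "'a measure \<Rightarrow> ('a \<Rightarrow> 'b::euclidean_space) \<Rightarrow> ('a \<Rightarrow> 'c::euclidean_space) \<Rightarrow> ('b \<Rightarrow> 'c \<Rightarrow> real) \<Rightarrow> bool"
where
  "cond_density M Y X q \<longleftrightarrow>
     (\<exists>g h. distributed M (lborel \<Otimes>\<^sub>M lborel) (\<lambda>\<omega>. (Y \<omega>, X \<omega>)) g
          \<and> distributed M lborel Y h
          \<and> (\<forall>a b. q a b = enn2real (g (a, b)) / enn2real (h a)))"

text \<open>Degenerate case (no conditioning variable): q a b is a version of the marginal density of X.\<close>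
definition marg_as_cond_density ::
  "'a measure \<Rightarrow> ('a \<Rightarrow> 'c::euclidean_space) \<Rightarrow> ('b \<Rightarrow> 'c \<Rightarrow> real) \<Rightarrow> bool"
where
  "marg_as_cond_density M X q \<longleftrightarrow>
     (\<exists>m. distributed M lborel X m \<and> (\<forall>a b. q a b = enn2real (m b)))"

end

theory Submission
  imports Defs
begin

lemma posdef_inj:
  fixes S :: "real^'d^'d"
  assumes "pos_def_mat S" shows "inj ((*v) S)"
proof (rule linear_injective_0[THEN iffD2])
  show "linear ((*v) S)" by simp
  show "\<forall>x. S *v x = 0 \<longrightarrow> x = 0"
    using assms unfolding pos_def_mat_def by (metis inner_zero_right less_irrefl)
qed

lemma posdef_invertible:
  fixes S :: "real^'d^'d"
  assumes "pos_def_mat S" shows "invertible S"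
  using posdef_inj[OF assms] invertible_left_inverse matrix_left_invertible_injective by blast

lemma posdef_inv_pos:
  fixes S :: "real^'d^'d"
  assumes "pos_def_mat S" "v \<noteq> 0" shows "0 < v \<bullet> (matrix_inv S *v v)"
proof -
  have inv: "invertible S" by (rule posdef_invertible[OF assms(1)])
  have SA: "S ** matrix_inv S = mat 1" "matrix_inv S ** S = mat 1"
    using inv unfolding invertible_def matrix_inv_def by (metis (mono_tags, lifting) someI_ex)+
  define w where "w = matrix_inv S *v v"
  have vw: "v = S *v w" unfolding w_def using SA by (simp add: matrix_vector_mul_assoc)
  have "w \<noteq> 0" using vw assms(2) by auto
  then have "0 < w \<bullet> (S *v w)" using assms(1) unfolding pos_def_mat_def by auto
  also have "w \<bullet> (S *v w) = (S *v w) \<bullet> w" by (simp add: inner_commute)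
  finally show ?thesis unfolding w_def[symmetric] using vw by (simp add: inner_commute)
qed

lemma det_cont:
  fixes S :: "real^'d^'d"
  shows "continuous_on UNIV (\<lambda>t::real. det ((1 - t) *\<^sub>R mat 1 + t *\<^sub>R S))"
  unfolding det_def
  by (intro continuous_intros)

lemma posdef_det_pos:
  fixes S :: "real^'d^'d"
  assumes "pos_def_mat S" shows "0 < det S"
proof (rule ccontr)
  assume "\<not> 0 < det S"
  define f where "f = (\<lambda>t::real. det ((1 - t) *\<^sub>R mat 1 + t *\<^sub>R S))"
  have f0: "f 0 = 1" unfolding f_def by simp
  have f1: "f 1 \<le> 0" unfolding f_def using \<open>\<not> 0 < det S\<close> by simp
  have "continuous_on {0..1} f" unfolding f_def using det_cont continuous_on_subset by blast
  then obtain t where t: "0 \<le> t" "t \<le> 1" "f t = 0"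
    using IVT2'[of f 1 0 0] f0 f1 by auto
  define M where "M = (1 - t) *\<^sub>R mat 1 + t *\<^sub>R (S::real^'d^'d)"
  have "pos_def_mat M"
    unfolding pos_def_mat_def
  proof
    show "transpose M = M" using assms unfolding M_def pos_def_mat_def
      by (simp add: transpose_def vec_eq_iff mat_def)
    show "\<forall>x. x \<noteq> 0 \<longrightarrow> 0 < x \<bullet> (M *v x)"
    proof (intro allI impI)
      fix x :: "real^'d" assume "x \<noteq> 0"
      have "M *v x = (1 - t) *\<^sub>R x + t *\<^sub>R (S *v x)"
        unfolding M_def by (simp add: matrix_vector_mult_add_rdistrib scaleR_matrix_vector_assoc[symmetric])
      then have "x \<bullet> (M *v x) = (1 - t) * (x \<bullet> x) + t * (x \<bullet> (S *v x))"
        by (simp add: inner_add_right)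
      moreover have "0 < x \<bullet> x" using \<open>x \<noteq> 0\<close> by simp
      moreover have "0 < x \<bullet> (S *v x)" using assms \<open>x \<noteq> 0\<close> unfolding pos_def_mat_def by auto
      ultimately show "0 < x \<bullet> (M *v x)" using t
        by (cases "t = 0") (auto intro: add_pos_nonneg add_nonneg_pos)
    qed
  qed
  then have "invertible M" by (rule posdef_invertible)
  then have "det M \<noteq> 0" using invertible_det_nz by blast
  then show False using t(3) unfolding f_def M_def by simp
qed

lemma posdef_quad_bound:
  fixes S :: "real^'d^'d"
  assumes "pos_def_mat S"
  shows "\<exists>l>0. \<forall>v. l * (norm v)^2 \<le> v \<bullet> (matrix_inv S *v v)"
proof -
  let ?g = "\<lambda>v::real^'d. v \<bullet> (matrix_inv S *v v)"
  have cont: "continuous_on (sphere 0 1) ?g"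
    by (intro continuous_intros linear_continuous_on matrix_vector_mult_linear_continuous_on)
  have ne: "sphere (0::real^'d) 1 \<noteq> {}" by simp
  obtain u where u: "u \<in> sphere 0 1" "\<And>y. y \<in> sphere 0 1 \<Longrightarrow> ?g u \<le> ?g y"
    using continuous_attains_inf[OF compact_sphere ne cont] by blast
  have "u \<noteq> 0" using u(1) by auto
  then have lpos: "0 < ?g u" using posdef_inv_pos[OF assms] by blast
  show ?thesis
  proof (intro exI[of _ "?g u"] conjI allI lpos)
    fix v :: "real^'d"
    show "?g u * (norm v)^2 \<le> ?g v"
    proof (cases "v = 0")
      case True then show ?thesis by simp
    next
      case False
      define w where "w = (1 / norm v) *\<^sub>R v"
      have w: "w \<in> sphere 0 1" using False unfolding w_def by simp
      have vw: "v = norm v *\<^sub>R w" using False unfolding w_def by simp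
      have "?g v = (norm v)^2 * ?g w"
        by (subst (1 2) vw) (simp add: matrix_vector_mult_scaleR power2_eq_square)
      then show ?thesis using u(2)[OF w] by (simp add: mult_right_mono mult.commute[of "(norm v)^2"])
    qed
  qed
qed

lemma gauss1_fin:
  fixes a :: real assumes "0 < a"
  shows "(\<integral>\<^sup>+y. ennreal (exp (- a * y^2)) \<partial>lborel) < \<infinity>"
proof -
  define s where "s = sqrt (1 / (2 * a))"
  have spos: "0 < s" unfolding s_def using assms by simp
  have s2: "s^2 = 1 / (2*a)" unfolding s_def using assms by simp
  define C where "C = sqrt (2 * pi * s^2)"
  have Cpos: "0 < C" unfolding C_def s2 using assms by simp
  have eq: "exp (- a * y^2) = C * normal_density 0 s y" for y
  proof -
    have "C = sqrt (2 * pi * s^2)" by (simp add: C_def)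
    then show ?thesis unfolding normal_density_def using Cpos assms
      by (simp add: s2 field_simps)
  qed
  have "(\<integral>\<^sup>+y. ennreal (exp (- a * y^2)) \<partial>lborel) = (\<integral>\<^sup>+y. ennreal C * ennreal (normal_density 0 s y) \<partial>lborel)"
    by (intro nn_integral_cong) (simp only: eq ennreal_mult Cpos less_imp_le normal_density_nonneg)
  also have "\<dots> = ennreal C * (\<integral>\<^sup>+y. ennreal (normal_density 0 s y) \<partial>lborel)"
    by (rule nn_integral_cmult) simp
  also have "(\<integral>\<^sup>+y. ennreal (normal_density 0 s y) \<partial>lborel) = 1"
  proof -
    interpret prob_space "density lborel (normal_density 0 s)" using prob_space_normal_density spos by auto
    show ?thesis using emeasure_space_1 spos by (simp add: emeasure_density)
  qed
  finally show ?thesis by simp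
qed

lemma gauss_fin:
  fixes a :: real assumes "0 < a"
  shows "(\<integral>\<^sup>+x. ennreal (exp (- a * (norm (x::'v::euclidean_space))^2)) \<partial>lborel) < \<infinity>"
proof -
  interpret P: product_sigma_finite "\<lambda>_::'v. lborel :: real measure" by standard
  have nsq: "(norm (\<Sum>b\<in>Basis. g b *\<^sub>R b :: 'v))^2 = (\<Sum>b\<in>Basis. (g b)^2)" for g :: "'v \<Rightarrow> real"
    apply (subst power2_norm_eq_inner)
    apply (simp add: inner_sum_left inner_sum_right inner_Basis if_distrib cong: if_cong)
    apply (simp add: power2_eq_square)
    done
  have "(\<integral>\<^sup>+x. ennreal (exp (- a * (norm (x::'v))^2)) \<partial>lborel) =
     (\<integral>\<^sup>+g. ennreal (exp (- a * (norm (\<Sum>b\<in>Basis. g b *\<^sub>R b :: 'v))^2)) \<partial>(\<Pi>\<^sub>M b\<in>Basis. lborel))"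
    by (subst lborel_eq) (simp add: nn_integral_distr)
  also have "\<dots> = (\<integral>\<^sup>+g. (\<Prod>b\<in>(Basis::'v set). ennreal (exp (- a * (g b)^2))) \<partial>(\<Pi>\<^sub>M b\<in>(Basis::'v set). lborel))"
  proof (intro nn_integral_cong)
    fix g :: "'v \<Rightarrow> real"
    have "exp (- a * (norm (\<Sum>b\<in>Basis. g b *\<^sub>R b :: 'v))^2) = (\<Prod>b\<in>Basis. exp (- a * (g b)^2))"
      by (simp add: nsq sum_distrib_left exp_sum[symmetric])
    then show "ennreal (exp (- a * (norm (\<Sum>b\<in>Basis. g b *\<^sub>R b :: 'v))^2)) = (\<Prod>b\<in>(Basis::'v set). ennreal (exp (- a * (g b)^2)))"
      by (simp add: prod_ennreal)
  qed
  also have "\<dots> = (\<Prod>b\<in>(Basis::'v set). (\<integral>\<^sup>+y. ennreal (exp (- a * y^2)) \<partial>lborel))"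
    by (rule P.product_nn_integral_prod) auto
  also have "\<dots> < \<infinity>"
    using gauss1_fin[OF assms] by (simp add: power_less_top_ennreal)
  finally show ?thesis .
qed

lemma nn_integral_lborel_affine:
  fixes t :: "'a::euclidean_space"
  assumes [measurable]: "f \<in> borel_measurable borel" and c: "c \<noteq> 0"
  shows "(\<integral>\<^sup>+x. f x \<partial>lborel) = ennreal (\<bar>c\<bar>^DIM('a)) * (\<integral>\<^sup>+x. f (t + c *\<^sub>R x) \<partial>lborel)"
  by (subst lborel_affine[OF c, of t])
     (simp add: nn_integral_density nn_integral_distr nn_integral_cmult)

lemma nn_integral_lborel_translate:
  fixes t :: "'a::euclidean_space"
  assumes [measurable]: "f \<in> borel_measurable borel"
  shows "(\<integral>\<^sup>+x. f x \<partial>lborel) = (\<integral>\<^sup>+x. f (t + x) \<partial>lborel)"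
  using nn_integral_lborel_affine[OF assms, of 1 t] by simp

lemma mvn_cont: "continuous_on UNIV (mvn_density mu S)"
  unfolding mvn_density_def divide_inverse
  by (intro continuous_intros bounded_linear.continuous_on[OF matrix_vector_mul_bounded_linear])

lemma mvn_meas[measurable]: "mvn_density mu S \<in> borel_measurable borel"
  using mvn_cont borel_measurable_continuous_onI by blast

lemma mvn_pos:
  fixes S :: "real^'d^'d"
  assumes "pos_def_mat S" shows "0 < mvn_density mu S x"
  unfolding mvn_density_def using posdef_det_pos[OF assms] by (intro divide_pos_pos) auto

lemma mvn_fin:
  fixes S :: "real^'d^'d"
  assumes "pos_def_mat S" shows "(\<integral>\<^sup>+x. ennreal (mvn_density mu S x) \<partial>lborel) < \<infinity>"
proof -
  obtain l where l: "l > 0" "\<And>v. l * (norm v)^2 \<le> v \<bullet> (matrix_inv S *v v)"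
    using posdef_quad_bound[OF assms] by blast
  define K where "K = sqrt ((2 * pi) ^ CARD('d) * det S)"
  have K: "0 < K" unfolding K_def using posdef_det_pos[OF assms] by simp
  have le: "mvn_density mu S x \<le> (1/K) * exp (- (l/2) * (norm (x - mu))^2)" for x
  proof -
    have e: "exp (- (1/2) * ((x - mu) \<bullet> (matrix_inv S *v (x - mu)))) \<le> exp (- (l/2) * (norm (x - mu))^2)"
      using l(2)[of "x - mu"] by simp
    have "mvn_density mu S x = exp (- (1/2) * ((x - mu) \<bullet> (matrix_inv S *v (x - mu)))) / K"
      unfolding mvn_density_def K_def by simp
    also have "\<dots> \<le> exp (- (l/2) * (norm (x - mu))^2) / K"
      by (rule divide_right_mono[OF e]) (use K in simp)
    finally show ?thesis by simp
  qed
  have "(\<integral>\<^sup>+x. ennreal (mvn_density mu S x) \<partial>lborel) \<le>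
        (\<integral>\<^sup>+x. ennreal (1/K) * ennreal (exp (- (l/2) * (norm (x - mu))^2)) \<partial>lborel)"
  proof (intro nn_integral_mono)
    fix x
    have "ennreal (mvn_density mu S x) \<le> ennreal ((1/K) * exp (- (l/2) * (norm (x - mu))^2))"
      by (rule ennreal_leI[OF le])
    also have "\<dots> = ennreal (1/K) * ennreal (exp (- (l/2) * (norm (x - mu))^2))"
      by (rule ennreal_mult) (use K in auto)
    finally show "ennreal (mvn_density mu S x) \<le> ennreal (1/K) * ennreal (exp (- (l/2) * (norm (x - mu))^2))" .
  qed
  also have "\<dots> = ennreal (1/K) * (\<integral>\<^sup>+x. ennreal (exp (- (l/2) * (norm (x - mu))^2)) \<partial>lborel)"
    by (rule nn_integral_cmult) simp
  also have "(\<integral>\<^sup>+x. ennreal (exp (- (l/2) * (norm (x - mu))^2)) \<partial>lborel)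
      = (\<integral>\<^sup>+x. ennreal (exp (- (l/2) * (norm (x::real^'d))^2)) \<partial>lborel)"
    by (subst nn_integral_lborel_translate[where t=mu]) auto
  also have "ennreal (1/K) * \<dots> < \<infinity>"
    using gauss_fin[of "l/2", where 'v="real^'d"] l(1) by (simp add: ennreal_mult_less_top)
  finally show ?thesis .
qed

primrec cv :: "('v::euclidean_space \<Rightarrow> ennreal) \<Rightarrow> nat \<Rightarrow> 'v \<Rightarrow> ennreal" where
  "cv \<phi> 0 = \<phi>"
| "cv \<phi> (Suc k) = (\<lambda>b. \<integral>\<^sup>+x. \<phi> x * cv \<phi> k (b - x) \<partial>lborel)"

lemma cv_meas[measurable]:
  assumes [measurable]: "\<phi> \<in> borel_measurable borel"
  shows "cv \<phi> k \<in> borel_measurable borel"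
proof (induction k)
  case 0 then show ?case by simp
next
  case (Suc k)
  note Suc[measurable]
  show ?case by simp
qed

lemma cv_pos:
  assumes [measurable]: "\<phi> \<in> borel_measurable borel" and pos: "\<And>x. 0 < \<phi> x"
  shows "0 < cv \<phi> k b"
proof (induction k arbitrary: b)
  case 0 then show ?case using pos by simp
next
  case (Suc k)
  have "(\<integral>\<^sup>+x. \<phi> x * cv \<phi> k (b - x) \<partial>lborel) \<noteq> 0"
  proof
    assume "(\<integral>\<^sup>+x. \<phi> x * cv \<phi> k (b - x) \<partial>lborel) = 0"
    then have "AE x in lborel. \<phi> x * cv \<phi> k (b - x) = 0"
      by (subst (asm) nn_integral_0_iff_AE) auto
    moreover have "\<And>x. \<phi> x * cv \<phi> k (b - x) \<noteq> 0" using pos Suc by (metis mult_eq_0_iff not_less_zero order.strict_iff_not zero_le)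
    ultimately have "AE x in (lborel::'a measure). False" by simp
    then have "emeasure (lborel::'a measure) (space lborel) = 0"
      using ae_filter_eq_bot_iff trivial_limit_def by metis
    then show False by simp
  qed
  then show ?case by (simp add: zero_less_iff_neq_zero)
qed

context
  fixes \<phi> :: "'v::euclidean_space \<Rightarrow> ennreal"
  assumes \<phi>_meas[measurable]: "\<phi> \<in> borel_measurable borel"
    and \<phi>_fin: "(\<integral>\<^sup>+x. \<phi> x \<partial>lborel) < \<infinity>"
begin

lemma nu_finite: "finite_measure (density lborel \<phi>)"
  by (rule finite_measureI) (use \<phi>_fin in \<open>simp add: emeasure_density\<close>)

lemma nu_psf: "product_sigma_finite (\<lambda>_::'i. density lborel \<phi>)"
  unfolding product_sigma_finite_def
  using nu_finite finite_measure.sigma_finite_measure by blast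

lemma BL0:
  fixes K :: "'i set"
  assumes "finite K" "K \<noteq> {}" and [measurable]: "G \<in> borel_measurable borel"
  shows "(\<integral>\<^sup>+X. G (\<Sum>i\<in>K. X i) \<partial>PiM K (\<lambda>_. density lborel \<phi>)) = (\<integral>\<^sup>+b. G b * cv \<phi> (card K - 1) b \<partial>lborel)"
  using assms(1,2,3)
proof (induction K arbitrary: G rule: finite_ne_induct)
  case (singleton i)
  note singleton[measurable]
  interpret P: product_sigma_finite "\<lambda>_::'i. density lborel \<phi>" by (rule nu_psf)
  have "(\<integral>\<^sup>+X. G (\<Sum>i\<in>{i}. X i) \<partial>PiM {i} (\<lambda>_. density lborel \<phi>)) = (\<integral>\<^sup>+x. G x \<partial>density lborel \<phi>)"
    by (simp add: P.product_nn_integral_singleton)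
  also have "\<dots> = (\<integral>\<^sup>+b. G b * cv \<phi> (card {i} - 1) b \<partial>lborel)"
    by (simp add: nn_integral_density mult.commute)
  finally show ?case .
next
  case (insert i K)
  note insert.prems[measurable]
  interpret P: product_sigma_finite "\<lambda>_::'i. density lborel \<phi>" by (rule nu_psf)
  define k where "k = card K - 1"
  have "card K > 0" using insert by (simp add: card_gt_0_iff)
  then have ck: "card (insert i K) - 1 = Suc k" by (simp add: k_def insert.hyps)
  have "(\<integral>\<^sup>+X. G (\<Sum>j\<in>insert i K. X j) \<partial>PiM (insert i K) (\<lambda>_. density lborel \<phi>))
      = (\<integral>\<^sup>+X. (\<integral>\<^sup>+y. G (\<Sum>j\<in>insert i K. (X(i := y)) j) \<partial>density lborel \<phi>) \<partial>PiM K (\<lambda>_. density lborel \<phi>))"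
    by (rule P.product_nn_integral_insert) (use insert in auto)
  also have "\<dots> = (\<integral>\<^sup>+X. (\<lambda>s. \<integral>\<^sup>+y. \<phi> y * G (y + s) \<partial>lborel) (\<Sum>j\<in>K. X j) \<partial>PiM K (\<lambda>_. density lborel \<phi>))"
  proof (rule nn_integral_cong)
    fix X :: "'i \<Rightarrow> 'v"
    have "\<And>y. (\<Sum>j\<in>insert i K. (X(i := y)) j) = y + (\<Sum>j\<in>K. X j)"
      using insert by (simp add: sum.insert) (intro sum.cong; auto)
    then show "(\<integral>\<^sup>+y. G (\<Sum>j\<in>insert i K. (X(i := y)) j) \<partial>density lborel \<phi>) = (\<lambda>s. \<integral>\<^sup>+y. \<phi> y * G (y + s) \<partial>lborel) (\<Sum>j\<in>K. X j)"
      by (simp add: nn_integral_density)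
  qed
  also have "\<dots> = (\<integral>\<^sup>+s. (\<integral>\<^sup>+y. \<phi> y * G (y + s) \<partial>lborel) * cv \<phi> k s \<partial>lborel)"
    unfolding k_def by (rule insert.IH) simp
  also have "\<dots> = (\<integral>\<^sup>+s. (\<integral>\<^sup>+y. \<phi> y * G (y + s) * cv \<phi> k s \<partial>lborel) \<partial>lborel)"
    by (intro nn_integral_cong nn_integral_multc[symmetric]) simp
  also have "\<dots> = (\<integral>\<^sup>+y. (\<integral>\<^sup>+s. \<phi> y * G (y + s) * cv \<phi> k s \<partial>lborel) \<partial>lborel)"
    by (rule lborel_pair.Fubini') (simp add: split_beta')
  also have "\<dots> = (\<integral>\<^sup>+y. (\<integral>\<^sup>+b. \<phi> y * G b * cv \<phi> k (b - y) \<partial>lborel) \<partial>lborel)"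
  proof (rule nn_integral_cong)
    fix y :: 'v
    show "(\<integral>\<^sup>+s. \<phi> y * G (y + s) * cv \<phi> k s \<partial>lborel) = (\<integral>\<^sup>+b. \<phi> y * G b * cv \<phi> k (b - y) \<partial>lborel)"
      by (subst nn_integral_lborel_translate[where t="-y"]) (simp_all add: algebra_simps)
  qed
  also have "\<dots> = (\<integral>\<^sup>+b. (\<integral>\<^sup>+y. \<phi> y * G b * cv \<phi> k (b - y) \<partial>lborel) \<partial>lborel)"
    by (rule lborel_pair.Fubini') (simp add: split_beta')
  also have "\<dots> = (\<integral>\<^sup>+b. G b * cv \<phi> (Suc k) b \<partial>lborel)"
  proof (rule nn_integral_cong)
    fix b :: 'v
    have "(\<integral>\<^sup>+y. \<phi> y * G b * cv \<phi> k (b - y) \<partial>lborel) = (\<integral>\<^sup>+y. G b * (\<phi> y * cv \<phi> k (b - y)) \<partial>lborel)"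
      by (simp add: ac_simps)
    also have "\<dots> = G b * cv \<phi> (Suc k) b"
      by (subst nn_integral_cmult) simp_all
    finally show "(\<integral>\<^sup>+y. \<phi> y * G b * cv \<phi> k (b - y) \<partial>lborel) = G b * cv \<phi> (Suc k) b" .
  qed
  finally show ?case unfolding ck .
qed

end

context
  fixes \<phi> :: "'v::euclidean_space \<Rightarrow> ennreal"
  assumes \<phi>_meas[measurable]: "\<phi> \<in> borel_measurable borel"
    and \<phi>_fin: "(\<integral>\<^sup>+x. \<phi> x \<partial>lborel) < \<infinity>"
begin

lemma BL1:
  fixes K :: "'i set"
  assumes K: "finite K" "i0 \<in> K" "K - {i0} \<noteq> {}" and [measurable]: "G \<in> borel_measurable borel"
  shows "(\<integral>\<^sup>+X. G (\<Sum>i\<in>K. (X(i0 := z)) i) \<partial>PiM K (\<lambda>_. density lborel \<phi>))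
       = (\<integral>\<^sup>+b. G b * ((\<integral>\<^sup>+x. \<phi> x \<partial>lborel) * cv \<phi> (card K - 2) (b - z)) \<partial>lborel)"
proof -
  interpret P: product_sigma_finite "\<lambda>_::'i. density lborel \<phi>" by (rule nu_psf[OF \<phi>_meas \<phi>_fin])
  define K' where "K' = K - {i0}"
  have KK: "K = insert i0 K'" "i0 \<notin> K'" "finite K'" "K' \<noteq> {}" using K unfolding K'_def by auto
  have cK: "card K' - 1 = card K - 2" using KK by (simp add: card_insert_if)
  define c where "c = (\<integral>\<^sup>+x. \<phi> x \<partial>lborel)"
  have sumeq: "(\<Sum>i\<in>K. (X(i0 := z)) i) = z + (\<Sum>i\<in>K'. X i)" for X :: "'i \<Rightarrow> 'v"
    using KK by (simp add: sum.insert) (intro sum.cong; auto)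
  have "(\<integral>\<^sup>+X. G (\<Sum>i\<in>K. (X(i0 := z)) i) \<partial>PiM K (\<lambda>_. density lborel \<phi>))
      = (\<integral>\<^sup>+X. (\<integral>\<^sup>+y. G (\<Sum>i\<in>K. ((X(i0 := y))(i0 := z)) i) \<partial>density lborel \<phi>) \<partial>PiM K' (\<lambda>_. density lborel \<phi>))"
    unfolding KK(1) by (rule P.product_nn_integral_insert) (use KK in simp_all)
  also have "\<dots> = (\<integral>\<^sup>+X. c * G (z + (\<Sum>i\<in>K'. X i)) \<partial>PiM K' (\<lambda>_. density lborel \<phi>))"
  proof (rule nn_integral_cong)
    fix X :: "'i \<Rightarrow> 'v"
    have "(\<integral>\<^sup>+y. G (\<Sum>i\<in>K. ((X(i0 := y))(i0 := z)) i) \<partial>density lborel \<phi>)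
        = (\<integral>\<^sup>+y. G (z + (\<Sum>i\<in>K'. X i)) \<partial>density lborel \<phi>)"
      by (simp only: fun_upd_upd sumeq)
    also have "\<dots> = c * G (z + (\<Sum>i\<in>K'. X i))"
      by (simp add: emeasure_density c_def mult.commute)
    finally show "(\<integral>\<^sup>+y. G (\<Sum>i\<in>K. ((X(i0 := y))(i0 := z)) i) \<partial>density lborel \<phi>) = c * G (z + (\<Sum>i\<in>K'. X i))" .
  qed
  also have "\<dots> = c * (\<integral>\<^sup>+X. (\<lambda>s. G (z + s)) (\<Sum>i\<in>K'. X i) \<partial>PiM K' (\<lambda>_. density lborel \<phi>))"
    by (rule nn_integral_cmult) simp
  also have "\<dots> = c * (\<integral>\<^sup>+s. G (z + s) * cv \<phi> (card K' - 1) s \<partial>lborel)"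
    by (subst BL0[OF \<phi>_meas \<phi>_fin KK(3,4)]) simp_all
  also have "(\<integral>\<^sup>+s. G (z + s) * cv \<phi> (card K' - 1) s \<partial>lborel) = (\<integral>\<^sup>+b. G b * cv \<phi> (card K' - 1) (b - z) \<partial>lborel)"
    by (subst nn_integral_lborel_translate[where t="-z"]) (simp_all add: algebra_simps)
  also have "c * \<dots> = (\<integral>\<^sup>+b. c * (G b * cv \<phi> (card K' - 1) (b - z)) \<partial>lborel)"
    by (rule nn_integral_cmult[symmetric]) simp
  finally show ?thesis unfolding cK c_def by (simp add: ac_simps)
qed

end

definition Mv :: "nat \<Rightarrow> (nat \<Rightarrow> (nat \<times> nat \<Rightarrow> 'v) \<Rightarrow> 'v) \<Rightarrow> nat \<Rightarrow> (nat \<times> nat \<Rightarrow> 'v) \<Rightarrow> (nat \<Rightarrow> 'v::real_vector)" where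
  "Mv n \<beta> t X = restrict (\<lambda>s. (1 / (real n * real s)) *\<^sub>R (\<Sum>r\<in>{1..s}. \<beta> r X)) {1..t}"

definition yv :: "nat \<Rightarrow> nat \<Rightarrow> (nat \<Rightarrow> 'v) \<Rightarrow> 'v::real_vector" where
  "yv n s m = (real n * real s) *\<^sub>R m s - (real n * real (s - 1)) *\<^sub>R m (s - 1)"

definition Fd :: "nat \<Rightarrow> (nat \<Rightarrow> 'v::euclidean_space \<Rightarrow> ennreal) \<Rightarrow> nat \<Rightarrow> (nat \<Rightarrow> 'v) \<Rightarrow> ennreal" where
  "Fd n p t m = (\<Prod>s\<in>{1..t}. ennreal ((real n * real s) ^ DIM('v)) * p s (yv n s m))"

lemma yv_meas[measurable]:
  assumes "s \<in> {1..t}"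
  shows "yv n s \<in> borel_measurable (PiM {1..t} (\<lambda>_. (lborel :: 'v::euclidean_space measure)))"
proof (cases "s = 1")
  case True
  then show ?thesis unfolding yv_def using assms by simp
next
  case False
  then have "s - 1 \<in> {1..t}" using assms by auto
  then show ?thesis unfolding yv_def using assms by simp
qed

lemma Fd_meas[measurable]:
  assumes [measurable]: "\<And>s. p s \<in> borel_measurable borel"
  shows "Fd n p t \<in> borel_measurable (PiM {1..t} (\<lambda>_. (lborel :: 'v::euclidean_space measure)))"
  unfolding Fd_def
  by (intro borel_measurable_prod_ennreal borel_measurable_times_ennreal measurable_const
       measurable_compose[OF yv_meas assms]) auto

lemma lborel_psf: "product_sigma_finite (\<lambda>_::'i. (lborel :: 'v::euclidean_space measure))"
  unfolding product_sigma_finite_def by (simp add: lborel.sigma_finite_measure_axioms)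

context
  fixes \<nu> :: "'v::euclidean_space measure" and n :: nat
    and \<beta> :: "nat \<Rightarrow> (nat \<times> nat \<Rightarrow> 'v) \<Rightarrow> 'v" and p :: "nat \<Rightarrow> 'v \<Rightarrow> ennreal"
  assumes psf: "product_sigma_finite (\<lambda>_::nat\<times>nat. \<nu>)"
    and sets_nu[measurable_cong]: "sets \<nu> = sets borel"
    and npos: "0 < n"
    and loc: "\<And>r X Y. (\<And>k. k \<in> {1..n} \<Longrightarrow> X (r,k) = Y (r,k)) \<Longrightarrow> \<beta> r X = \<beta> r Y"
    and bmeas: "\<And>r. \<beta> r \<in> borel_measurable (PiM ({r}\<times>{1..n}) (\<lambda>_. \<nu>))"
    and law: "\<And>r G. G \<in> borel_measurable borel \<Longrightarrow>
        (\<integral>\<^sup>+X. G (\<beta> r X) \<partial>PiM ({r}\<times>{1..n}) (\<lambda>_. \<nu>)) = (\<integral>\<^sup>+b. G b * p r b \<partial>lborel)"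
    and pmeas[measurable]: "\<And>r. p r \<in> borel_measurable borel"
begin

lemma beta_meas_big[measurable]:
  assumes "r \<in> {1..t}"
  shows "\<beta> r \<in> borel_measurable (PiM ({1..t}\<times>{1..n}) (\<lambda>_. \<nu>))"
proof -
  have sub: "{r}\<times>{1..n} \<subseteq> {1..t}\<times>{1..n}" using assms by auto
  have "(\<lambda>X. \<beta> r (restrict X ({r}\<times>{1..n}))) \<in> borel_measurable (PiM ({1..t}\<times>{1..n}) (\<lambda>_. \<nu>))"
    by (rule measurable_compose[OF measurable_restrict_subset[OF sub] bmeas])
  moreover have "\<beta> r (restrict X ({r}\<times>{1..n})) = \<beta> r X" for X
    by (rule loc) simp
  ultimately show ?thesis by simp
qed

lemma Mv_meas[measurable]:
  "Mv n \<beta> t \<in> measurable (PiM ({1..t}\<times>{1..n}) (\<lambda>_. \<nu>)) (PiM {1..t} (\<lambda>_. lborel))"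
  unfolding Mv_def
proof (rule measurable_restrict)
  fix s assume s: "s \<in> {1..t}"
  have "\<And>r. r \<in> {1..s} \<Longrightarrow> \<beta> r \<in> borel_measurable (PiM ({1..t}\<times>{1..n}) (\<lambda>_. \<nu>))"
    using s by (intro beta_meas_big) auto
  then show "(\<lambda>X. (1 / (real n * real s)) *\<^sub>R (\<Sum>r\<in>{1..s}. \<beta> r X)) \<in> measurable (PiM ({1..t}\<times>{1..n}) (\<lambda>_. \<nu>)) lborel"
    by (simp add: borel_measurable_sum)
qed

lemma Mv_merge:
  "Mv n \<beta> (Suc t) (merge ({1..t}\<times>{1..n}) ({Suc t}\<times>{1..n}) (x, y)) =
   (Mv n \<beta> t x)(Suc t := (1 / (real n * real (Suc t))) *\<^sub>R
        ((real n * real t) *\<^sub>R Mv n \<beta> t x t + \<beta> (Suc t) y))"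
proof -
  let ?z = "merge ({1..t}\<times>{1..n}) ({Suc t}\<times>{1..n}) (x, y)"
  have b1: "\<beta> r ?z = \<beta> r x" if "r \<in> {1..t}" for r
    using that by (intro loc) (simp add: merge_def)
  have b2: "\<beta> (Suc t) ?z = \<beta> (Suc t) y"
    by (intro loc) (simp add: merge_def)
  have sx: "(real n * real t) *\<^sub>R Mv n \<beta> t x t = (\<Sum>r\<in>{1..t}. \<beta> r x)"
  proof (cases "t = 0")
    case True then show ?thesis by simp
  next
    case False then show ?thesis using npos by (simp add: Mv_def)
  qed
  show ?thesis
  proof (rule ext)
    fix s
    show "Mv n \<beta> (Suc t) ?z s = ((Mv n \<beta> t x)(Suc t := (1 / (real n * real (Suc t))) *\<^sub>R
        ((real n * real t) *\<^sub>R Mv n \<beta> t x t + \<beta> (Suc t) y))) s"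
    proof (cases "s = Suc t")
      case True
      have "(\<Sum>r\<in>{1..Suc t}. \<beta> r ?z) = (\<Sum>r\<in>{1..t}. \<beta> r x) + \<beta> (Suc t) y"
        using b1 b2 by (simp add: sum.cl_ivl_Suc)
      then show ?thesis using True sx by (simp add: Mv_def)
    next
      case False
      then show ?thesis using b1 by (auto simp: Mv_def intro!: sum.cong)
    qed
  qed
qed

lemma a_meas[measurable]:
  "(\<lambda>m::nat\<Rightarrow>'v. (x * real t) *\<^sub>R m t) \<in> borel_measurable (PiM {1..t} (\<lambda>_. lborel))"
proof (cases "t = 0")
  case True then show ?thesis by simp
next
  case False then have "t \<in> {1..t}" by auto
  then show ?thesis by simp
qed

lemma MV_law:
  "G \<in> borel_measurable (PiM {1..t} (\<lambda>_. lborel)) \<Longrightarrow>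
   (\<integral>\<^sup>+X. G (Mv n \<beta> t X) \<partial>PiM ({1..t}\<times>{1..n}) (\<lambda>_. \<nu>)) = (\<integral>\<^sup>+m. G m * Fd n p t m \<partial>PiM {1..t} (\<lambda>_. lborel))"
proof (induction t arbitrary: G)
  case 0
  interpret P: product_sigma_finite "\<lambda>_::nat\<times>nat. \<nu>" by (rule psf)
  interpret L: product_sigma_finite "\<lambda>_::nat. (lborel :: 'v measure)" by (rule lborel_psf)
  have "Mv n \<beta> 0 X = (\<lambda>_. undefined)" for X by (simp add: Mv_def restrict_def)
  then show ?case by (simp add: P.nn_integral_empty L.nn_integral_empty Fd_def space_PiM_empty)
next
  case (Suc t)
  note Suc.prems[measurable]
  interpret P: product_sigma_finite "\<lambda>_::nat\<times>nat. \<nu>" by (rule psf)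
  interpret L: product_sigma_finite "\<lambda>_::nat. (lborel :: 'v measure)" by (rule lborel_psf)
  define I where "I = {1..t}\<times>{1..n}"
  define J where "J = {Suc t}\<times>{1..n}"
  have IJ: "{1..Suc t}\<times>{1..n} = I \<union> J" "I \<inter> J = {}" "finite I" "finite J"
    unfolding I_def J_def by auto
  define c where "c = real n * real (Suc t)"
  have c0: "c \<noteq> 0" "0 < c" unfolding c_def using npos by auto
  define a where "a = (\<lambda>m::nat \<Rightarrow> 'v. (real n * real t) *\<^sub>R m t)"
  define upd where "upd = (\<lambda>(m::nat \<Rightarrow> 'v) b. m(Suc t := (1 / c) *\<^sub>R (a m + b)))"
  define K where "K = (\<lambda>m. ennreal (c ^ DIM('v)) * (\<integral>\<^sup>+u. G (m(Suc t := u)) * p (Suc t) (c *\<^sub>R u - a m) \<partial>lborel))"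
  have ins: "insert (Suc t) {1..t} = {1..Suc t}" by auto
  have "(\<lambda>(f,y). f(Suc t := y)) \<in> measurable (PiM {1..t} (\<lambda>_. lborel) \<Otimes>\<^sub>M lborel) (PiM {1..Suc t} (\<lambda>_. (lborel::'v measure)))"
    using measurable_add_dim[of "Suc t" "{1..t}" "\<lambda>_. (lborel::'v measure)"] unfolding ins .
  from measurable_compose[OF this Suc.prems]
  have Gi: "(\<lambda>x. G ((fst x)(Suc t := snd x))) \<in> borel_measurable (PiM {1..t} (\<lambda>_. lborel) \<Otimes>\<^sub>M lborel)"
    by (simp only: split_beta')
  have A: "(\<lambda>x::(nat \<Rightarrow> 'v) \<times> 'v. (real n * real t) *\<^sub>R fst x t) \<in> borel_measurable (PiM {1..t} (\<lambda>_. lborel) \<Otimes>\<^sub>M (lborel::'v measure))"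
    using measurable_compose[OF measurable_fst a_meas[of "real n" t], of "lborel::'v measure"] by simp
  have Gp[measurable]: "(\<lambda>(m, u). G (m(Suc t := u)) * p (Suc t) (c *\<^sub>R u - a m)) \<in> borel_measurable (PiM {1..t} (\<lambda>_. lborel) \<Otimes>\<^sub>M lborel)"
    unfolding a_def split_beta'
    by (intro borel_measurable_times_ennreal Gi measurable_compose[OF _ pmeas] borel_measurable_diff[OF _ A]) simp
  have Km[measurable]: "K \<in> borel_measurable (PiM {1..t} (\<lambda>_. lborel))"
    unfolding K_def by (intro borel_measurable_times_ennreal measurable_const lborel.borel_measurable_nn_integral Gp) simp
  have "(\<integral>\<^sup>+X. G (Mv n \<beta> (Suc t) X) \<partial>PiM ({1..Suc t}\<times>{1..n}) (\<lambda>_. \<nu>))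
     = (\<integral>\<^sup>+x. (\<integral>\<^sup>+y. G (Mv n \<beta> (Suc t) (merge I J (x, y))) \<partial>PiM J (\<lambda>_. \<nu>)) \<partial>PiM I (\<lambda>_. \<nu>))"
    unfolding IJ(1) by (rule P.product_nn_integral_fold[OF IJ(2,3,4)]) (unfold IJ(1)[symmetric], rule measurable_compose[OF Mv_meas Suc.prems])
  also have "\<dots> = (\<integral>\<^sup>+x. K (Mv n \<beta> t x) \<partial>PiM I (\<lambda>_. \<nu>))"
  proof (rule nn_integral_cong)
    fix x assume "x \<in> space (PiM I (\<lambda>_. \<nu>))"
    define m where "m = Mv n \<beta> t x"
    have msp: "m \<in> space (PiM {1..t} (\<lambda>_. (lborel :: 'v measure)))"
      unfolding m_def Mv_def by (simp add: space_PiM)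
    have "(\<integral>\<^sup>+y. G (Mv n \<beta> (Suc t) (merge I J (x, y))) \<partial>PiM J (\<lambda>_. \<nu>))
        = (\<integral>\<^sup>+y. (\<lambda>b. G (upd m b)) (\<beta> (Suc t) y) \<partial>PiM J (\<lambda>_. \<nu>))"
      unfolding I_def J_def Mv_merge upd_def m_def a_def c_def by simp
    also have "\<dots> = (\<integral>\<^sup>+b. G (upd m b) * p (Suc t) b \<partial>lborel)"
      proof -
      have um: "(\<lambda>b. upd m b) \<in> measurable lborel (PiM {1..Suc t} (\<lambda>_. (lborel::'v measure)))"
      proof -
        have "(\<lambda>v. m(Suc t := v)) \<in> measurable lborel (PiM {1..Suc t} (\<lambda>_. (lborel::'v measure)))"
          using measurable_component_update[OF msp, of "Suc t"] unfolding ins by simp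
        from measurable_compose[OF _ this, of "\<lambda>b. (1 / c) *\<^sub>R (a m + b)"]
        show ?thesis unfolding upd_def by simp
      qed
      have Gu: "(\<lambda>b. G (upd m b)) \<in> borel_measurable borel"
        using measurable_compose[OF um Suc.prems] by simp
      show ?thesis unfolding J_def using law[OF Gu, of "Suc t"] by simp
    qed
    also have "\<dots> = K m"
      proof -
      have um: "(\<lambda>b. upd m b) \<in> measurable lborel (PiM {1..Suc t} (\<lambda>_. (lborel::'v measure)))"
      proof -
        have "(\<lambda>v. m(Suc t := v)) \<in> measurable lborel (PiM {1..Suc t} (\<lambda>_. (lborel::'v measure)))"
          using measurable_component_update[OF msp, of "Suc t"] unfolding ins by simp
        from measurable_compose[OF _ this, of "\<lambda>b. (1 / c) *\<^sub>R (a m + b)"]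
        show ?thesis unfolding upd_def by simp
      qed
      have Gu: "(\<lambda>b. G (upd m b) * p (Suc t) b) \<in> borel_measurable borel"
        using measurable_compose[OF um Suc.prems] by simp
      have e: "upd m (c *\<^sub>R u - a m) = m(Suc t := u)" for u
        unfolding upd_def using c0 by simp
      show ?thesis
        unfolding K_def using c0
        by (subst nn_integral_lborel_affine[OF Gu c0(1), of "- a m"]) (simp add: e algebra_simps)
    qed
    finally show "(\<integral>\<^sup>+y. G (Mv n \<beta> (Suc t) (merge I J (x, y))) \<partial>PiM J (\<lambda>_. \<nu>)) = K (Mv n \<beta> t x)"
      unfolding m_def .
  qed
  also have "\<dots> = (\<integral>\<^sup>+m. K m * Fd n p t m \<partial>PiM {1..t} (\<lambda>_. lborel))"
    unfolding I_def by (rule Suc.IH) (rule Km)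
  also have "\<dots> = (\<integral>\<^sup>+m. (\<integral>\<^sup>+u. G (m(Suc t := u)) * Fd n p (Suc t) (m(Suc t := u)) \<partial>lborel) \<partial>PiM {1..t} (\<lambda>_. lborel))"
    proof (rule nn_integral_cong)
    fix m assume msp: "m \<in> space (PiM {1..t} (\<lambda>_. (lborel :: 'v measure)))"
    have fd: "Fd n p (Suc t) (m(Suc t := u)) = Fd n p t m * (ennreal (c ^ DIM('v)) * p (Suc t) (c *\<^sub>R u - a m))" for u
    proof -
      have "yv n s (m(Suc t := u)) = yv n s m" if "s \<in> {1..t}" for s
        using that unfolding yv_def by auto
      then have "(\<Prod>s\<in>{1..t}. ennreal ((real n * real s) ^ DIM('v)) * p s (yv n s (m(Suc t := u))))
          = (\<Prod>s\<in>{1..t}. ennreal ((real n * real s) ^ DIM('v)) * p s (yv n s m))"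
        by (intro prod.cong) auto
      moreover have "yv n (Suc t) (m(Suc t := u)) = c *\<^sub>R u - a m"
        unfolding yv_def c_def a_def by simp
      ultimately show ?thesis unfolding Fd_def c_def by (simp add: prod.cl_ivl_Suc)
    qed
    have "K m * Fd n p t m = (\<integral>\<^sup>+u. G (m(Suc t := u)) * p (Suc t) (c *\<^sub>R u - a m) \<partial>lborel) * (ennreal (c ^ DIM('v)) * Fd n p t m)"
      unfolding K_def by (simp add: ac_simps)
    also have "\<dots> = (\<integral>\<^sup>+u. G (m(Suc t := u)) * p (Suc t) (c *\<^sub>R u - a m) * (ennreal (c ^ DIM('v)) * Fd n p t m) \<partial>lborel)"
      by (rule nn_integral_multc[symmetric]) (use Gp msp in simp)
    also have "\<dots> = (\<integral>\<^sup>+u. G (m(Suc t := u)) * Fd n p (Suc t) (m(Suc t := u)) \<partial>lborel)"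
      by (intro nn_integral_cong) (simp add: fd ac_simps)
    finally show "K m * Fd n p t m = (\<integral>\<^sup>+u. G (m(Suc t := u)) * Fd n p (Suc t) (m(Suc t := u)) \<partial>lborel)" .
  qed
  also have "\<dots> = (\<integral>\<^sup>+m. G m * Fd n p (Suc t) m \<partial>PiM {1..Suc t} (\<lambda>_. lborel))"
    unfolding ins[symmetric] by (rule L.product_nn_integral_insert[symmetric]) (simp, simp, unfold ins, intro borel_measurable_times_ennreal Suc.prems Fd_meas pmeas)
  finally show ?case .
qed

end

lemma TR:
  assumes F0[measurable]: "F0 \<in> borel_measurable E" and pos: "\<And>m. m \<in> space E \<Longrightarrow> 0 < F0 m"
    and V[measurable]: "V \<in> measurable E W"
    and g0[measurable]: "g0 \<in> borel_measurable W"
    and eq: "distr (density E F0) W V = density W g0"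
    and P: "AE w in density W g0. P w" and Pm[measurable]: "{w \<in> space W. P w} \<in> sets W"
  shows "AE m in E. P (V m)"
proof -
  have "AE w in distr (density E F0) W V. P w" unfolding eq by (rule P)
  then have "AE m in density E F0. P (V m)"
    by (subst (asm) AE_distr_iff) (simp_all)
  then have "AE m in E. 0 < F0 m \<longrightarrow> P (V m)" by (simp add: AE_density)
  then show ?thesis using pos by (auto elim!: AE_mp intro!: AE_I2)
qed

lemma TR_W:
  assumes g0[measurable]: "g0 \<in> borel_measurable W"
    and P: "AE w in W. P w"
  shows "AE w in density W g0. P w"
  using P by (simp add: AE_density) (auto elim!: AE_mp)

lemma TR_fin:
  assumes F0[measurable]: "F0 \<in> borel_measurable E"
    and fin: "emeasure (density E F0) (space E) < \<infinity>"
    and V[measurable]: "V \<in> measurable E W"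
    and g0[measurable]: "g0 \<in> borel_measurable W"
    and eq: "distr (density E F0) W V = density W g0"
  shows "AE w in W. g0 w \<noteq> \<infinity>"
proof (rule nn_integral_PInf_AE[OF g0])
  have "integral\<^sup>N W g0 = emeasure (density W g0) (space W)"
    by (simp add: emeasure_density)
  also have "\<dots> = emeasure (distr (density E F0) W V) (space W)" by (simp add: eq)
  also have "\<dots> = emeasure (density E F0) (space E)"
    by (subst emeasure_distr) (simp_all add: measurable_space[OF V] vimage_def Int_absorb1 subset_eq)
  finally show "integral\<^sup>N W g0 \<noteq> \<infinity>" using fin by simp
qed

lemma FIN:
  fixes \<rho> :: "'v::topological_space \<Rightarrow> ennreal"
  assumes sfE: "sigma_finite_measure E" and sfW: "sigma_finite_measure W"
    and F0[measurable]: "F0 \<in> borel_measurable E" and pos: "\<And>m. m \<in> space E \<Longrightarrow> 0 < F0 m"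
    and fin: "emeasure (density E F0) (space E) < \<infinity>"
    and F1[measurable]: "F1 \<in> borel_measurable E" and F1eq: "AE m in E. F1 m = F0 m * \<rho> (y m)"
    and \<rho>[measurable]: "\<rho> \<in> borel_measurable borel"
    and V[measurable]: "V \<in> measurable E W" and ww[measurable]: "ww \<in> borel_measurable W"
    and ywV: "\<And>m. m \<in> space E \<Longrightarrow> y m = ww (V m)"
    and f0: "density E f0 = density E F0" and f0m[measurable]: "f0 \<in> borel_measurable E"
    and f1: "density E f1 = density E F1" and f1m[measurable]: "f1 \<in> borel_measurable E"
    and g0: "distr (density E F0) W V = density W g0" and g0m[measurable]: "g0 \<in> borel_measurable W"
    and g1: "distr (density E F1) W V = density W g1" and g1m[measurable]: "g1 \<in> borel_measurable W"
  shows "AE m in E. f0 m = F0 m \<and> f1 m = F0 m * \<rho> (y m) \<and> 0 < F0 m \<and> F0 m < \<infinity> \<and>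
            g1 (V m) = g0 (V m) * \<rho> (y m) \<and> 0 < g0 (V m) \<and> g0 (V m) < \<infinity>"
proof -
  interpret E: sigma_finite_measure E by (rule sfE)
  interpret W: sigma_finite_measure W by (rule sfW)
  have yV: "AE m in E. y m = ww (V m)" by (rule AE_I2) (rule ywV)
  have a1: "AE m in E. f0 m = F0 m" by (rule E.density_unique[OF f0m F0 f0])
  have a2: "AE m in E. f1 m = F1 m" by (rule E.density_unique[OF f1m F1 f1])
  have "integral\<^sup>N E F0 \<noteq> \<infinity>" using fin by (simp add: emeasure_density)
  then have a3: "AE m in E. F0 m \<noteq> \<infinity>" by (rule nn_integral_PInf_AE[OF F0])
  have a4: "AE m in E. 0 < F0 m" by (rule AE_I2) (rule pos)
  have "density E F1 = density E (\<lambda>m. F0 m * \<rho> (ww (V m)))"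
    using F1eq yV by (intro density_cong) (auto elim!: AE_mp)
  also have "\<dots> = density (density E F0) (\<lambda>m. \<rho> (ww (V m)))"
    by (rule density_density_eq[symmetric]) simp_all
  finally have "distr (density E F1) W V = distr (density (density E F0) (\<lambda>m. \<rho> (ww (V m)))) W V"
    by simp
  also have "\<dots> = density (distr (density E F0) W V) (\<lambda>x. \<rho> (ww x))"
    by (rule density_distr[symmetric]) simp_all
  also have "\<dots> = density W (\<lambda>x. g0 x * \<rho> (ww x))"
    unfolding g0 by (rule density_density_eq) simp_all
  finally have "density W g1 = density W (\<lambda>x. g0 x * \<rho> (ww x))" using g1 by simp
  then have "AE x in W. g1 x = g0 x * \<rho> (ww x)"
    by (rule W.density_unique[OF g1m, rotated]) simp
  then have b1: "AE m in E. g1 (V m) = g0 (V m) * \<rho> (ww (V m))"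
    by (intro TR[OF F0 pos V g0m g0] TR_W[OF g0m]) simp_all
  have b2: "AE m in E. 0 < g0 (V m)"
    by (intro TR[OF F0 pos V g0m g0]) (simp_all add: AE_density)
  have "AE x in W. g0 x \<noteq> \<infinity>" by (rule TR_fin[OF F0 fin V g0m g0])
  then have b3: "AE m in E. g0 (V m) \<noteq> \<infinity>"
    by (intro TR[OF F0 pos V g0m g0] TR_W[OF g0m]) simp_all
  show ?thesis
    using a1 a2 a3 a4 b1 b2 b3 F1eq yV
    by eventually_elim (auto simp: less_top)
qed

lemma sum_batch: "(\<Sum>k\<in>{1..n}. X (r, k)) = (\<Sum>i\<in>{r}\<times>{1..n}. X i)"
proof -
  have "{r}\<times>{1..n} = Pair r ` {1..n}" by auto
  then show ?thesis by (simp add: sum.reindex inj_on_def)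
qed

definition beta0 :: "nat \<Rightarrow> nat \<Rightarrow> (nat \<times> nat \<Rightarrow> 'v) \<Rightarrow> 'v::real_vector" where
  "beta0 n r X = (\<Sum>k\<in>{1..n}. X (r, k))"

definition betaj :: "nat \<Rightarrow> nat \<Rightarrow> 'v \<Rightarrow> nat \<Rightarrow> nat \<Rightarrow> (nat \<times> nat \<Rightarrow> 'v) \<Rightarrow> 'v::real_vector" where
  "betaj n tau z j r X = (\<Sum>k\<in>{1..n}. (X((tau, j) := z)) (r, k))"

lemma beta0_meas:
  assumes "sets M = sets borel"
  shows "beta0 n r \<in> borel_measurable (PiM ({r}\<times>{1..n}) (\<lambda>_. M :: 'v::euclidean_space measure))"
  unfolding beta0_def
proof (intro borel_measurable_sum)
  fix k assume "k \<in> {1..n}"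
  then have "(\<lambda>X. X (r,k)) \<in> measurable (PiM ({r}\<times>{1..n}) (\<lambda>_. M)) M"
    by (intro measurable_component_singleton) auto
  then show "(\<lambda>X. X (r,k)) \<in> borel_measurable (PiM ({r}\<times>{1..n}) (\<lambda>_. M))"
    unfolding measurable_cong_sets[OF refl assms, symmetric] .
qed

lemma betaj_meas:
  assumes "sets M = sets borel"
  shows "betaj n tau z j r \<in> borel_measurable (PiM ({r}\<times>{1..n}) (\<lambda>_. M :: 'v::euclidean_space measure))"
  unfolding betaj_def
proof (intro borel_measurable_sum)
  fix k assume "k \<in> {1..n}"
  then have "(\<lambda>X. X (r,k)) \<in> measurable (PiM ({r}\<times>{1..n}) (\<lambda>_. M)) M"
    by (intro measurable_component_singleton) auto
  then have "(\<lambda>X. X (r,k)) \<in> borel_measurable (PiM ({r}\<times>{1..n}) (\<lambda>_. M))"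
    unfolding measurable_cong_sets[OF refl assms, symmetric] .
  then show "(\<lambda>X. (X((tau, j) := z)) (r,k)) \<in> borel_measurable (PiM ({r}\<times>{1..n}) (\<lambda>_. M))"
    by (cases "(r,k) = (tau,j)") simp_all
qed

definition p0f :: "nat \<Rightarrow> ('v::euclidean_space \<Rightarrow> ennreal) \<Rightarrow> nat \<Rightarrow> 'v \<Rightarrow> ennreal" where
  "p0f n \<phi> = (\<lambda>r. cv \<phi> (n - 1))"

definition p1f :: "nat \<Rightarrow> nat \<Rightarrow> 'v \<Rightarrow> ('v::euclidean_space \<Rightarrow> ennreal) \<Rightarrow> nat \<Rightarrow> 'v \<Rightarrow> ennreal" where
  "p1f n tau z \<phi> = (\<lambda>r. if r = tau then (\<lambda>b. (\<integral>\<^sup>+x. \<phi> x \<partial>lborel) * cv \<phi> (n - 2) (b - z)) else cv \<phi> (n - 1))"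

context
  fixes \<phi> :: "'v::euclidean_space \<Rightarrow> ennreal" and n :: nat and tau :: nat and z :: 'v
  assumes \<phi>_meas[measurable]: "\<phi> \<in> borel_measurable borel"
    and \<phi>_fin: "(\<integral>\<^sup>+x. \<phi> x \<partial>lborel) < \<infinity>"
    and n2: "2 \<le> n"
begin

lemma p0f_meas[measurable]: "p0f n \<phi> r \<in> borel_measurable borel"
  unfolding p0f_def by simp

lemma p1f_meas[measurable]: "p1f n tau z \<phi> r \<in> borel_measurable borel"
  unfolding p1f_def by simp

lemma law0:
  assumes [measurable]: "G \<in> borel_measurable borel"
  shows "(\<integral>\<^sup>+X. G (beta0 n r X) \<partial>PiM ({r}\<times>{1..n}) (\<lambda>_. density lborel \<phi>)) = (\<integral>\<^sup>+b. G b * p0f n \<phi> r b \<partial>lborel)"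
proof -
  have c: "card ({r}\<times>{1..n}) = n" by (simp add: card_cartesian_product)
  have ne: "{r}\<times>{1..n} \<noteq> {}" using n2 by auto
  have "(\<integral>\<^sup>+X. G (beta0 n r X) \<partial>PiM ({r}\<times>{1..n}) (\<lambda>_. density lborel \<phi>))
     = (\<integral>\<^sup>+X. G (\<Sum>i\<in>{r}\<times>{1..n}. X i) \<partial>PiM ({r}\<times>{1..n}) (\<lambda>_. density lborel \<phi>))"
    by (simp only: beta0_def sum_batch)
  also have "\<dots> = (\<integral>\<^sup>+b. G b * cv \<phi> (card ({r}\<times>{1..n}) - 1) b \<partial>lborel)"
    by (rule BL0[OF \<phi>_meas \<phi>_fin]) (use ne in simp_all)
  finally show ?thesis unfolding c p0f_def .
qed

lemma lawj:
  assumes [measurable]: "G \<in> borel_measurable borel" and j: "j \<in> {1..n}"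
  shows "(\<integral>\<^sup>+X. G (betaj n tau z j r X) \<partial>PiM ({r}\<times>{1..n}) (\<lambda>_. density lborel \<phi>)) = (\<integral>\<^sup>+b. G b * p1f n tau z \<phi> r b \<partial>lborel)"
proof (cases "r = tau")
  case False
  then have "betaj n tau z j r X = beta0 n r X" for X
    unfolding betaj_def beta0_def by (intro sum.cong) auto
  then show ?thesis using law0[OF assms(1), of r] False by (simp add: p1f_def p0f_def)
next
  case True
  have c: "card ({r}\<times>{1..n}) = n" by (simp add: card_cartesian_product)
  have ne: "{r}\<times>{1..n} - {(tau, j)} \<noteq> {}"
  proof
    assume "{r}\<times>{1..n} - {(tau, j)} = {}"
    then have "{r}\<times>{1..n} \<subseteq> {(tau, j)}" by auto
    then have "card ({r}\<times>{1..n}) \<le> card {(tau, j)}" by (intro card_mono) auto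
    then have "card ({r}\<times>{1..n}) \<le> 1" by simp
    then show False using c n2 by simp
  qed
  have "betaj n tau z j r X = (\<Sum>i\<in>{r}\<times>{1..n}. (X((tau, j) := z)) i)" for X
    unfolding betaj_def by (rule sum_batch)
  then have "(\<integral>\<^sup>+X. G (betaj n tau z j r X) \<partial>PiM ({r}\<times>{1..n}) (\<lambda>_. density lborel \<phi>))
     = (\<integral>\<^sup>+X. G (\<Sum>i\<in>{r}\<times>{1..n}. (X((tau, j) := z)) i) \<partial>PiM ({r}\<times>{1..n}) (\<lambda>_. density lborel \<phi>))"
    by (simp only:)
  also have "\<dots> = (\<integral>\<^sup>+b. G b * ((\<integral>\<^sup>+x. \<phi> x \<partial>lborel) * cv \<phi> (card ({r}\<times>{1..n}) - 2) (b - z)) \<partial>lborel)"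
    by (rule BL1[OF \<phi>_meas \<phi>_fin]) (use ne True j in simp_all)
  finally show ?thesis unfolding c p1f_def using True by simp
qed

end

lemma DD:
  assumes f[measurable]: "f \<in> measurable M N" and F[measurable]: "F \<in> borel_measurable N"
    and eq: "\<And>G. G \<in> borel_measurable N \<Longrightarrow> (\<integral>\<^sup>+x. G (f x) \<partial>M) = (\<integral>\<^sup>+m. G m * F m \<partial>N)"
  shows "distr M N f = density N F"
proof (rule measure_eqI)
  fix A assume A: "A \<in> sets (distr M N f)"
  then have A'[measurable]: "A \<in> sets N" by simp
  have "emeasure (distr M N f) A = emeasure M (f -` A \<inter> space M)"
    by (rule emeasure_distr) simp_all
  also have "\<dots> = (\<integral>\<^sup>+x. indicator (f -` A \<inter> space M) x \<partial>M)"
    by (rule nn_integral_indicator[symmetric]) (rule measurable_sets[OF f A'])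
  also have "\<dots> = (\<integral>\<^sup>+x. indicator A (f x) \<partial>M)"
    by (rule nn_integral_cong) (auto split: split_indicator)
  also have "\<dots> = (\<integral>\<^sup>+m. indicator A m * F m \<partial>N)" by (rule eq) simp
  also have "\<dots> = emeasure (density N F) A" by (simp add: emeasure_density mult.commute)
  finally show "emeasure (distr M N f) A = emeasure (density N F) A" .
qed simp

lemma muhat_vec_Mv0: "muhat_vec n T X = Mv n (beta0 n) T X"
  unfolding muhat_vec_def Mv_def muhat_def beta0_def by simp

lemma muhat_vec_Mvj: "muhat_vec n T (X((tau, j) := z)) = Mv n (betaj n tau z j) T X"
  unfolding muhat_vec_def Mv_def muhat_def betaj_def by simp

context
  fixes mu :: "real^'d" and S :: "real^'d^'d" and n T tau :: nat and z :: "real^'d"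
  assumes S: "pos_def_mat S" and n2: "2 \<le> n" and T1: "1 \<le> T" and tau: "tau \<in> {1..T}"
begin

definition "phi = (\<lambda>x. ennreal (mvn_density mu S x))"

lemma phi_meas[measurable]: "phi \<in> borel_measurable borel"
  unfolding phi_def by simp

lemma phi_pos: "0 < phi x"
  unfolding phi_def using mvn_pos[OF S] by simp

lemma phi_fin: "(\<integral>\<^sup>+x. phi x \<partial>lborel) < \<infinity>"
  unfolding phi_def by (rule mvn_fin[OF S])

lemma P0_eq: "data_H0 n T mu S = PiM ({1..T}\<times>{1..n}) (\<lambda>_. density lborel phi)"
  unfolding data_H0_def phi_def ..

lemma MV0:
  assumes "G \<in> borel_measurable (PiM {1..T} (\<lambda>_. lborel))"
  shows "(\<integral>\<^sup>+X. G (muhat_vec n T X) \<partial>data_H0 n T mu S) = (\<integral>\<^sup>+m. G m * Fd n (p0f n phi) T m \<partial>PiM {1..T} (\<lambda>_. lborel))"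
  unfolding P0_eq muhat_vec_Mv0
  by (rule MV_law[OF nu_psf[OF phi_meas phi_fin] _ _ _ beta0_meas law0[OF phi_meas phi_fin n2] p0f_meas[OF phi_meas phi_fin n2] assms])
     (use n2 in \<open>auto simp: beta0_def\<close>)

lemma MVj:
  assumes "G \<in> borel_measurable (PiM {1..T} (\<lambda>_. lborel))" and j: "j \<in> {1..n}"
  shows "(\<integral>\<^sup>+X. G (muhat_vec n T (X((tau, j) := z))) \<partial>data_H0 n T mu S) = (\<integral>\<^sup>+m. G m * Fd n (p1f n tau z phi) T m \<partial>PiM {1..T} (\<lambda>_. lborel))"
  unfolding P0_eq muhat_vec_Mvj
  by (rule MV_law[OF nu_psf[OF phi_meas phi_fin] _ _ _ betaj_meas[where n=n and tau=tau and z=z and j=j] lawj[OF phi_meas phi_fin n2 _ j, where tau=tau and z=z] p1f_meas[OF phi_meas phi_fin n2, where tau=tau and z=z] assms(1)])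
     (use n2 in \<open>auto simp: betaj_def intro!: sum.cong\<close>)


lemma muhat_meas:
  assumes M: "sets M = sets borel" and s: "s \<le> T"
  shows "(\<lambda>X. muhat n X s) \<in> borel_measurable (PiM ({1..T}\<times>{1..n}) (\<lambda>_. M :: (real^'d) measure))"
  unfolding muhat_def
proof (intro borel_measurable_scaleR borel_measurable_const borel_measurable_sum)
  fix j k assume "j \<in> {1..s}" "k \<in> {1..n}"
  then have "(\<lambda>X. X (j,k)) \<in> measurable (PiM ({1..T}\<times>{1..n}) (\<lambda>_. M)) M"
    using s by (intro measurable_component_singleton) auto
  then show "(\<lambda>X. X (j,k)) \<in> borel_measurable (PiM ({1..T}\<times>{1..n}) (\<lambda>_. M))"
    unfolding measurable_cong_sets[OF refl M, symmetric] .
qed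

lemma muhat_vec_meas:
  assumes M: "sets M = sets borel"
  shows "muhat_vec n T \<in> measurable (PiM ({1..T}\<times>{1..n}) (\<lambda>_. M :: (real^'d) measure)) (PiM {1..T} (\<lambda>_. lborel))"
  unfolding muhat_vec_def
  by (rule measurable_restrict) (use muhat_meas[OF M] in simp)

definition "UU = uniform_measure (count_space UNIV) {1..n}"
definition "RR = (\<lambda>(X::nat\<times>nat \<Rightarrow> real^'d, j::nat). if j \<in> {1..n} then X((tau, j) := z) else X)"

lemma UU_prob: "prob_space UU"
  unfolding UU_def using n2 by (intro prob_space_uniform_measure) auto

lemma sets_UU[simp]: "sets UU = UNIV" unfolding UU_def by simp
lemma space_UU[simp]: "space UU = UNIV" unfolding UU_def by simp

lemma P0_fin: "finite_measure (data_H0 n T mu S)"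
proof -
  interpret P: product_sigma_finite "\<lambda>_::nat\<times>nat. density lborel phi" by (rule nu_psf[OF phi_meas phi_fin])
  have "emeasure (data_H0 n T mu S) (space (data_H0 n T mu S)) = (\<Prod>i\<in>{1..T}\<times>{1..n}. emeasure (density lborel phi) UNIV)"
    unfolding P0_eq space_PiM by (subst P.emeasure_PiM) auto
  also have "\<dots> < \<infinity>" using phi_fin by (simp add: emeasure_density power_less_top_ennreal)
  finally show ?thesis by (intro finite_measureI) simp
qed

lemma RR_meas: "RR \<in> measurable (data_H0 n T mu S \<Otimes>\<^sub>M UU) (PiM ({1..T}\<times>{1..n}) (\<lambda>_. lborel))"
proof -
  have RR_eq: "RR = (\<lambda>x i. if snd x \<in> {1..n} \<and> i = (tau, snd x) then z else fst x i)"
    unfolding RR_def by (auto simp: fun_eq_iff)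
  show ?thesis unfolding RR_eq
  proof (rule measurable_PiM_single')
    fix i :: "nat \<times> nat" assume i: "i \<in> {1..T}\<times>{1..n}"
    have c: "(\<lambda>x. fst x i) \<in> measurable (data_H0 n T mu S \<Otimes>\<^sub>M UU) lborel"
    proof -
      have e: "measurable (PiM ({1..T}\<times>{1..n}) (\<lambda>_. density lborel phi)) (density lborel phi)
          = measurable (PiM ({1..T}\<times>{1..n}) (\<lambda>_. density lborel phi)) lborel"
        by (rule measurable_cong_sets) simp_all
      have "(\<lambda>a. a i) \<in> measurable (PiM ({1..T}\<times>{1..n}) (\<lambda>_. density lborel phi)) (density lborel phi)"
        by (rule measurable_component_singleton) (use i in simp)
      then have "(\<lambda>a. a i) \<in> measurable (PiM ({1..T}\<times>{1..n}) (\<lambda>_. density lborel phi)) lborel"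
        unfolding e .
      then show ?thesis unfolding P0_eq by (rule measurable_compose[OF measurable_fst])
    qed
    have p: "{x \<in> space (data_H0 n T mu S \<Otimes>\<^sub>M UU). snd x \<in> {1..n} \<and> i = (tau, snd x)} \<in> sets (data_H0 n T mu S \<Otimes>\<^sub>M UU)"
    proof -
      have "{x \<in> space (data_H0 n T mu S \<Otimes>\<^sub>M UU). snd x \<in> {1..n} \<and> i = (tau, snd x)}
          = space (data_H0 n T mu S) \<times> {j. j \<in> {1..n} \<and> i = (tau, j)}"
        by (auto simp: space_pair_measure)
      then show ?thesis by simp
    qed
    show "(\<lambda>x. if snd x \<in> {1..n} \<and> i = (tau, snd x) then z else fst x i) \<in> measurable (data_H0 n T mu S \<Otimes>\<^sub>M UU) lborel"
      by (rule measurable_If[OF measurable_const c p]) simp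
  next
    show "(\<lambda>x i. if snd x \<in> {1..n} \<and> i = (tau, snd x) then z else fst x i)
        \<in> space (data_H0 n T mu S \<Otimes>\<^sub>M UU) \<rightarrow> (\<Pi>\<^sub>E i\<in>{1..T}\<times>{1..n}. space lborel)"
      using tau by (auto simp: space_pair_measure P0_eq space_PiM PiE_def extensional_def)
  qed
qed


lemma P1_eq: "data_H1 n T mu S z tau = distr (data_H0 n T mu S \<Otimes>\<^sub>M UU) (PiM ({1..T}\<times>{1..n}) (\<lambda>_. lborel)) RR"
proof (cases "z = undefined")
  case True
  show ?thesis unfolding data_H1_def UU_def[symmetric]
  proof (rule distr_cong)
    fix x assume "x \<in> space (data_H0 n T mu S \<Otimes>\<^sub>M UU)"
    then obtain X j where x: "x = (X, j)" "X \<in> space (data_H0 n T mu S)" by (auto simp: space_pair_measure)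
    show "(case x of (X, j) \<Rightarrow> X((tau, j) := z)) = RR x"
    proof (cases "j \<in> {1..n}")
      case True then show ?thesis unfolding x RR_def by simp
    next
      case False
      then have "X (tau, j) = undefined" using x(2) unfolding P0_eq by (auto simp: space_PiM PiE_def extensional_def)
      then show ?thesis unfolding x RR_def using False \<open>z = undefined\<close> by auto
    qed
  qed simp_all
next
  case False
  let ?M = "data_H0 n T mu S \<Otimes>\<^sub>M UU"
  let ?N = "PiM ({1..T}\<times>{1..n}) (\<lambda>_. (lborel :: (real^'d) measure))"
  let ?R = "\<lambda>(X, j). X((tau, j) := z)"
  define Z where "Z = space (data_H0 n T mu S) \<times> (UNIV - {1..n})"
  interpret P0: finite_measure "data_H0 n T mu S" by (rule P0_fin)
  interpret U: prob_space UU by (rule UU_prob)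
  interpret PU: pair_sigma_finite "data_H0 n T mu S" UU ..
  have Znull: "Z \<in> null_sets ?M"
  proof -
    have "emeasure UU (UNIV - {1..n}) = 0" unfolding UU_def by simp
    then have "emeasure ?M Z = 0" unfolding Z_def by (subst U.emeasure_pair_measure_Times) simp_all
    moreover have "Z \<in> sets ?M" unfolding Z_def by simp
    ultimately show ?thesis by (simp add: null_sets_def)
  qed
  have "measure_of (space ?N) (sets ?N) (\<lambda>A. emeasure ?M (?R -` A \<inter> space ?M))
      = measure_of (space ?N) (sets ?N) (\<lambda>A. emeasure ?M (RR -` A \<inter> space ?M))"
  proof (rule measure_of_eq)
    show "sets ?N \<subseteq> Pow (space ?N)" by (rule sets.space_closed)
    fix A assume "A \<in> sigma_sets (space ?N) (sets ?N)"
    then have A: "A \<in> sets ?N" by (simp add: sets.sigma_sets_eq)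
    have eq: "?R -` A \<inter> space ?M = (RR -` A \<inter> space ?M) - Z"
    proof (intro set_eqI iffI)
      fix x assume x: "x \<in> ?R -` A \<inter> space ?M"
      then obtain X j where xx: "x = (X, j)" by (cases x)
      have "X((tau, j) := z) \<in> space ?N" using x xx sets.sets_into_space[OF A] by auto
      then have j: "j \<in> {1..n}" using False tau
        by (auto simp: space_PiM PiE_def extensional_def split: if_splits dest!: spec[of _ "(tau, j)"])
      then show "x \<in> (RR -` A \<inter> space ?M) - Z" using x xx unfolding RR_def Z_def by auto
    next
      fix x assume x: "x \<in> (RR -` A \<inter> space ?M) - Z"
      then obtain X j where xx: "x = (X, j)" by (cases x)
      have "j \<in> {1..n}" using x xx unfolding Z_def by (auto simp: space_pair_measure)
      then show "x \<in> ?R -` A \<inter> space ?M" using x xx unfolding RR_def by auto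
    qed
    have "RR -` A \<inter> space ?M \<in> sets ?M" by (rule measurable_sets[OF RR_meas A])
    then show "emeasure ?M (?R -` A \<inter> space ?M) = emeasure ?M (RR -` A \<inter> space ?M)"
      unfolding eq by (rule emeasure_Diff_null_set[OF Znull])
  qed
  then show ?thesis unfolding data_H1_def UU_def[symmetric] distr_def by simp
qed

abbreviation "EE \<equiv> PiM {1..T} (\<lambda>_. (lborel :: (real^'d) measure))"

lemma Q0: "distr (data_H0 n T mu S) EE (muhat_vec n T) = density EE (Fd n (p0f n phi) T)"
proof (rule DD)
  show "muhat_vec n T \<in> measurable (data_H0 n T mu S) EE"
    unfolding P0_eq by (rule muhat_vec_meas) simp
  show "Fd n (p0f n phi) T \<in> borel_measurable EE"
    by (rule Fd_meas) (rule p0f_meas[OF phi_meas phi_fin n2])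
qed (rule MV0)

lemma Q1: "distr (data_H1 n T mu S z tau) EE (muhat_vec n T) = density EE (Fd n (p1f n tau z phi) T)"
proof -
  interpret P0: finite_measure "data_H0 n T mu S" by (rule P0_fin)
  interpret U: prob_space UU by (rule UU_prob)
  interpret PU: pair_sigma_finite "data_H0 n T mu S" UU ..
  have mv: "muhat_vec n T \<in> measurable (PiM ({1..T}\<times>{1..n}) (\<lambda>_. lborel)) EE"
    by (rule muhat_vec_meas) simp
  have "distr (data_H1 n T mu S z tau) EE (muhat_vec n T)
      = distr (data_H0 n T mu S \<Otimes>\<^sub>M UU) EE (muhat_vec n T \<circ> RR)"
    unfolding P1_eq by (rule distr_distr[OF mv RR_meas])
  also have "\<dots> = density EE (Fd n (p1f n tau z phi) T)"
  proof (rule DD)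
    show "muhat_vec n T \<circ> RR \<in> measurable (data_H0 n T mu S \<Otimes>\<^sub>M UU) EE"
      by (rule measurable_comp[OF RR_meas mv])
    show "Fd n (p1f n tau z phi) T \<in> borel_measurable EE"
      by (rule Fd_meas) (rule p1f_meas[OF phi_meas phi_fin n2])
    fix G :: "(nat \<Rightarrow> real^'d) \<Rightarrow> ennreal" assume G[measurable]: "G \<in> borel_measurable EE"
    have Gm: "(\<lambda>x. G ((muhat_vec n T \<circ> RR) x)) \<in> borel_measurable (data_H0 n T mu S \<Otimes>\<^sub>M UU)"
      by (rule measurable_compose[OF measurable_comp[OF RR_meas mv] G])
    have "(\<integral>\<^sup>+x. G ((muhat_vec n T \<circ> RR) x) \<partial>(data_H0 n T mu S \<Otimes>\<^sub>M UU))
        = (\<integral>\<^sup>+j. (\<integral>\<^sup>+X. G ((muhat_vec n T \<circ> RR) (X, j)) \<partial>data_H0 n T mu S) \<partial>UU)"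
      by (rule PU.nn_integral_snd[OF Gm, symmetric])
    also have "\<dots> = (\<integral>\<^sup>+j. (\<integral>\<^sup>+m. G m * Fd n (p1f n tau z phi) T m \<partial>EE) \<partial>UU)"
    proof (rule nn_integral_cong_AE)
      have "AE j in UU. j \<in> {1..n}" unfolding UU_def by (rule AE_uniform_measureI) auto
      then show "AE j in UU. (\<integral>\<^sup>+X. G ((muhat_vec n T \<circ> RR) (X, j)) \<partial>data_H0 n T mu S) = (\<integral>\<^sup>+m. G m * Fd n (p1f n tau z phi) T m \<partial>EE)"
      proof (rule AE_mp, intro AE_I2 impI)
        fix j assume j: "j \<in> {1..n}"
        have "(\<integral>\<^sup>+X. G ((muhat_vec n T \<circ> RR) (X, j)) \<partial>data_H0 n T mu S)
            = (\<integral>\<^sup>+X. G (muhat_vec n T (X((tau, j) := z))) \<partial>data_H0 n T mu S)"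
          using j unfolding RR_def by simp
        also have "\<dots> = (\<integral>\<^sup>+m. G m * Fd n (p1f n tau z phi) T m \<partial>EE)"
          by (rule MVj[OF G j])
        finally show "(\<integral>\<^sup>+X. G ((muhat_vec n T \<circ> RR) (X, j)) \<partial>data_H0 n T mu S) = (\<integral>\<^sup>+m. G m * Fd n (p1f n tau z phi) T m \<partial>EE)" .
      qed
    qed
    also have "\<dots> = (\<integral>\<^sup>+m. G m * Fd n (p1f n tau z phi) T m \<partial>EE)"
      using U.emeasure_space_1 by simp
    finally show "(\<integral>\<^sup>+x. G ((muhat_vec n T \<circ> RR) x) \<partial>(data_H0 n T mu S \<Otimes>\<^sub>M UU)) = (\<integral>\<^sup>+m. G m * Fd n (p1f n tau z phi) T m \<partial>EE)" .
  qed
  finally show ?thesis .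
qed

lemma Hmarg:
  assumes s: "s < tau"
  shows "distr (data_H1 n T mu S z tau) lborel (\<lambda>X. muhat n X s) = distr (data_H0 n T mu S) lborel (\<lambda>X. muhat n X s)"
proof -
  interpret P0: finite_measure "data_H0 n T mu S" by (rule P0_fin)
  interpret U: prob_space UU by (rule UU_prob)
  have sT: "s \<le> T" using s tau by auto
  have gm: "(\<lambda>X::nat\<times>nat\<Rightarrow>real^'d. muhat n X s) \<in> borel_measurable (PiM ({1..T}\<times>{1..n}) (\<lambda>_. lborel))"
    by (rule muhat_meas[OF _ sT]) simp
  have gm0: "(\<lambda>X::nat\<times>nat\<Rightarrow>real^'d. muhat n X s) \<in> borel_measurable (data_H0 n T mu S)"
    unfolding P0_eq by (rule muhat_meas[OF _ sT]) simp
  have "distr (data_H1 n T mu S z tau) lborel (\<lambda>X. muhat n X s)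
      = distr (data_H0 n T mu S \<Otimes>\<^sub>M UU) lborel ((\<lambda>X. muhat n X s) \<circ> RR)"
    unfolding P1_eq by (rule distr_distr[OF _ RR_meas]) (use gm in simp)
  also have "\<dots> = distr (data_H0 n T mu S \<Otimes>\<^sub>M UU) lborel ((\<lambda>X. muhat n X s) \<circ> fst)"
  proof (rule distr_cong)
    fix x :: "(nat \<times> nat \<Rightarrow> real^'d) \<times> nat"
    obtain X j where x: "x = (X, j)" by (cases x)
    have "muhat n (X((tau, j) := z)) s = muhat n X s"
      unfolding muhat_def using s by (intro arg_cong[where f="\<lambda>v. _ *\<^sub>R v"] sum.cong refl) auto
    then show "((\<lambda>X. muhat n X s) \<circ> RR) x = ((\<lambda>X. muhat n X s) \<circ> fst) x"
      unfolding x RR_def by simp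
  qed simp_all
  also have "\<dots> = distr (distr (data_H0 n T mu S \<Otimes>\<^sub>M UU) (data_H0 n T mu S) fst) lborel (\<lambda>X. muhat n X s)"
    by (rule distr_distr[symmetric]) (use gm0 in simp_all)
  also have "\<dots> = distr (data_H0 n T mu S) lborel (\<lambda>X. muhat n X s)"
    by (simp add: U.distr_pair_fst)
  finally show ?thesis .
qed


lemma EE_sf: "sigma_finite_measure EE"
  by (rule product_sigma_finite.sigma_finite[OF lborel_psf]) simp

lemma F0_meas[measurable]: "Fd n (p0f n phi) T \<in> borel_measurable EE"
  by (rule Fd_meas) (rule p0f_meas[OF phi_meas phi_fin n2])

lemma F1_meas[measurable]: "Fd n (p1f n tau z phi) T \<in> borel_measurable EE"
  by (rule Fd_meas) (rule p1f_meas[OF phi_meas phi_fin n2])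

lemma fac0_ne: "s \<in> {1..T} \<Longrightarrow> ennreal ((real n * real s) ^ DIM(real^'d)) * p0f n phi s y \<noteq> 0"
  using n2 cv_pos[OF phi_meas phi_pos, of "n - 1" y] unfolding p0f_def by auto

lemma F0_pos: "0 < Fd n (p0f n phi) T m"
  unfolding Fd_def zero_less_iff_neq_zero using fac0_ne n2 by simp

lemma Q0_fin: "emeasure (density EE (Fd n (p0f n phi) T)) (space EE) < \<infinity>"
proof -
  interpret P0: finite_measure "data_H0 n T mu S" by (rule P0_fin)
  have mv: "muhat_vec n T \<in> measurable (data_H0 n T mu S) EE"
    unfolding P0_eq by (rule muhat_vec_meas) simp
  have "emeasure (density EE (Fd n (p0f n phi) T)) (space EE) = emeasure (distr (data_H0 n T mu S) EE (muhat_vec n T)) (space EE)"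
    by (simp only: Q0)
  also have "\<dots> = emeasure (data_H0 n T mu S) (space (data_H0 n T mu S))"
  proof -
    have "muhat_vec n T -` space EE \<inter> space (data_H0 n T mu S) = space (data_H0 n T mu S)"
      using measurable_space[OF mv] by blast
    then show ?thesis by (subst emeasure_distr[OF mv]) simp_all
  qed
  also have "\<dots> < \<infinity>" by (simp add: less_top[symmetric])
  finally show ?thesis .
qed

definition "rho = (\<lambda>b. p1f n tau z phi tau b / cv phi (n - 1) b)"

lemma rho_meas[measurable]: "rho \<in> borel_measurable borel"
  unfolding rho_def using p1f_meas[OF phi_meas phi_fin n2] cv_meas[OF phi_meas] by simp

lemma F1eq: "AE m in EE. Fd n (p1f n tau z phi) T m = Fd n (p0f n phi) T m * rho (yv n tau m)"
proof -
  have "emeasure (density EE (Fd n (p0f n phi) T)) (space EE) = integral\<^sup>N EE (Fd n (p0f n phi) T)"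
    by (subst emeasure_density[OF F0_meas sets.top]) (auto intro!: nn_integral_cong)
  then have "integral\<^sup>N EE (Fd n (p0f n phi) T) \<noteq> \<infinity>"
    using Q0_fin by simp
  then have "AE m in EE. Fd n (p0f n phi) T m \<noteq> \<infinity>"
    by (rule nn_integral_PInf_AE[rotated]) (rule Fd_meas, rule p0f_meas[OF phi_meas phi_fin n2])
  then show ?thesis
  proof (rule AE_mp, intro AE_I2 impI)
    fix m assume fin: "Fd n (p0f n phi) T m \<noteq> \<infinity>"
    define f where "f = (\<lambda>p s. ennreal ((real n * real s) ^ DIM(real^'d)) * p s (yv n s m))"
    have split: "Fd n p T m = (\<Prod>s\<in>{1..T} - {tau}. f p s) * f p tau" for p
      unfolding Fd_def f_def using tau by (subst prod.remove[of _ tau]) (simp_all add: mult.commute)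
    have same: "(\<Prod>s\<in>{1..T} - {tau}. f (p1f n tau z phi) s) = (\<Prod>s\<in>{1..T} - {tau}. f (p0f n phi) s)"
      unfolding f_def p1f_def p0f_def by (intro prod.cong) auto
    have Rpos: "(\<Prod>s\<in>{1..T} - {tau}. f (p0f n phi) s) \<noteq> 0"
      unfolding f_def using fac0_ne n2 by simp
    have "f (p0f n phi) tau \<noteq> \<infinity>" using fin Rpos unfolding split by (auto simp: ennreal_mult_eq_top_iff)
    then have cvfin: "cv phi (n - 1) (yv n tau m) \<noteq> top"
      unfolding f_def p0f_def using n2 tau by (auto simp: ennreal_mult_eq_top_iff)
    have cvpos: "cv phi (n - 1) (yv n tau m) \<noteq> 0" using cv_pos[OF phi_meas phi_pos] by (metis less_irrefl)
    have "f (p1f n tau z phi) tau = f (p0f n phi) tau * rho (yv n tau m)"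
    proof -
      have "p1f n tau z phi tau (yv n tau m) = cv phi (n - 1) (yv n tau m) * rho (yv n tau m)"
        unfolding rho_def ennreal_times_divide
        using mult_divide_eq_ennreal[OF cvpos cvfin, of "p1f n tau z phi tau (yv n tau m)"]
        by (simp add: mult.commute)
      then show ?thesis unfolding f_def p0f_def by (simp add: mult.assoc)
    qed
    then show "Fd n (p1f n tau z phi) T m = Fd n (p0f n phi) T m * rho (yv n tau m)"
      unfolding split same by (simp add: mult.assoc)
  qed
qed


lemma mv0: "muhat_vec n T \<in> measurable (data_H0 n T mu S) EE"
  unfolding P0_eq by (rule muhat_vec_meas) simp

lemma mv1: "muhat_vec n T \<in> measurable (data_H1 n T mu S z tau) EE"
proof -
  have "muhat_vec n T \<in> measurable (PiM ({1..T}\<times>{1..n}) (\<lambda>_. lborel)) EE"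
    by (rule muhat_vec_meas) simp
  moreover have "sets (data_H1 n T mu S z tau) = sets (PiM ({1..T}\<times>{1..n}) (\<lambda>_. (lborel :: (real^'d) measure)))"
    unfolding data_H1_def by simp
  ultimately show ?thesis using measurable_cong_sets[OF _ refl] by blast
qed

lemma LV0:
  assumes V: "V \<in> measurable EE W"
  shows "distr (data_H0 n T mu S) W (\<lambda>X. V (muhat_vec n T X)) = distr (density EE (Fd n (p0f n phi) T)) W V"
  using distr_distr[OF V mv0] Q0 by (simp add: comp_def)

lemma LV1:
  assumes V: "V \<in> measurable EE W"
  shows "distr (data_H1 n T mu S z tau) W (\<lambda>X. V (muhat_vec n T X)) = distr (density EE (Fd n (p1f n tau z phi) T)) W V"
  using distr_distr[OF V mv1] Q1 by (simp add: comp_def)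

lemma arith_fin:
  assumes "0 < A" "A < top" shows "enn2real (A * r) / enn2real A = enn2real r"
proof -
  have "0 < enn2real A" using assms by (simp add: enn2real_positive_iff)
  then show ?thesis by (simp add: enn2real_mult)
qed

lemma main:
  fixes f0 f1 :: "(nat \<Rightarrow> real^'d) \<Rightarrow> ennreal"
    and q0 q1 :: "real^'d \<Rightarrow> real^'d \<Rightarrow> real"
  assumes d0: "distributed (data_H0 n T mu S) (PiM {1..T} (\<lambda>_. lborel)) (muhat_vec n T) f0"
    and d1: "distributed (data_H1 n T mu S z tau) (PiM {1..T} (\<lambda>_. lborel)) (muhat_vec n T) f1"
    and m0: "tau = 1 \<Longrightarrow> marg_as_cond_density (data_H0 n T mu S) (\<lambda>X. muhat n X 1) q0"
    and m1: "tau = 1 \<Longrightarrow> marg_as_cond_density (data_H1 n T mu S z tau) (\<lambda>X. muhat n X 1) q1"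
    and c0: "tau \<ge> 2 \<Longrightarrow> cond_density (data_H0 n T mu S)
           (\<lambda>X. muhat n X (tau - 1)) (\<lambda>X. muhat n X tau) q0"
    and c1: "tau \<ge> 2 \<Longrightarrow> cond_density (data_H1 n T mu S z tau)
           (\<lambda>X. muhat n X (tau - 1)) (\<lambda>X. muhat n X tau) q1"
  shows "AE x in PiM {1..T} (\<lambda>_. lborel).
           enn2real (f1 x) / enn2real (f0 x)
             = q1 (x (tau - 1)) (x tau) / q0 (x (tau - 1)) (x tau)"
proof -
  let ?F0 = "Fd n (p0f n phi) T" and ?F1 = "Fd n (p1f n tau z phi) T"
  have f0m[measurable]: "f0 \<in> borel_measurable EE" and f0eq: "density EE f0 = density EE ?F0"
    using d0 Q0 unfolding distributed_def by auto
  have f1m[measurable]: "f1 \<in> borel_measurable EE" and f1eq: "density EE f1 = density EE ?F1"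
    using d1 Q1 unfolding distributed_def by auto
  have muv: "muhat_vec n T X s = muhat n X s" if "s \<in> {1..T}" for X :: "nat\<times>nat\<Rightarrow>real^'d" and s
    using that unfolding muhat_vec_def by simp
  show ?thesis
  proof (cases "tau = 1")
    case True
    obtain g0 where g0: "distributed (data_H0 n T mu S) lborel (\<lambda>X. muhat n X 1) g0"
      and q0: "\<And>a b. q0 a b = enn2real (g0 b)" using m0[OF True] unfolding marg_as_cond_density_def by blast
    obtain g1 where g1: "distributed (data_H1 n T mu S z tau) lborel (\<lambda>X. muhat n X 1) g1"
      and q1: "\<And>a b. q1 a b = enn2real (g1 b)" using m1[OF True] unfolding marg_as_cond_density_def by blast
    have V: "(\<lambda>m. m 1) \<in> measurable EE (lborel :: (real^'d) measure)"
      by (rule measurable_component_singleton) (use T1 in simp)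
    have e1: "(\<lambda>X::nat\<times>nat\<Rightarrow>real^'d. muhat n X 1) = (\<lambda>X. (\<lambda>m. m 1) (muhat_vec n T X))" using muv[of 1] T1 by auto
    have g0eq: "distr (density EE ?F0) lborel (\<lambda>m. m 1) = density lborel g0"
      using g0 LV0[OF V] unfolding distributed_def e1 by simp
    have g1eq: "distr (density EE ?F1) lborel (\<lambda>m. m 1) = density lborel g1"
      using g1 LV1[OF V] unfolding distributed_def e1 by simp
    have AE: "AE m in EE. f0 m = ?F0 m \<and> f1 m = ?F0 m * rho (yv n tau m) \<and> 0 < ?F0 m \<and> ?F0 m < \<infinity> \<and>
            g1 (m 1) = g0 (m 1) * rho (yv n tau m) \<and> 0 < g0 (m 1) \<and> g0 (m 1) < \<infinity>"
    proof -
      have g0m: "g0 \<in> borel_measurable lborel" and g1m: "g1 \<in> borel_measurable lborel"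
        using g0 g1 unfolding distributed_def by auto
      have wwm: "(\<lambda>b::real^'d. (real n * real tau) *\<^sub>R b) \<in> borel_measurable lborel" by simp
      have ywV: "yv n tau m = (\<lambda>b. (real n * real tau) *\<^sub>R b) (m 1)" for m :: "nat \<Rightarrow> real^'d"
        unfolding yv_def True by simp
      show ?thesis
        by (rule FIN[OF EE_sf lborel.sigma_finite_measure_axioms F0_meas F0_pos Q0_fin F1_meas F1eq rho_meas
            V wwm ywV f0eq f0m f1eq f1m g0eq g0m g1eq g1m])
    qed
    show ?thesis using AE
    proof (rule AE_mp, intro AE_I2 impI)
      fix x assume h: "f0 x = ?F0 x \<and> f1 x = ?F0 x * rho (yv n tau x) \<and> 0 < ?F0 x \<and> ?F0 x < \<infinity> \<and>
            g1 (x 1) = g0 (x 1) * rho (yv n tau x) \<and> 0 < g0 (x 1) \<and> g0 (x 1) < \<infinity>"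
      then show "enn2real (f1 x) / enn2real (f0 x) = q1 (x (tau - 1)) (x tau) / q0 (x (tau - 1)) (x tau)"
        unfolding q0 q1 True by (simp add: arith_fin)
    qed
  next
    case False
    then have tau2: "tau \<ge> 2" using tau by auto
    obtain g0 h0 where g0: "distributed (data_H0 n T mu S) (lborel \<Otimes>\<^sub>M lborel) (\<lambda>X. (muhat n X (tau - 1), muhat n X tau)) g0"
      and h0: "distributed (data_H0 n T mu S) lborel (\<lambda>X. muhat n X (tau - 1)) h0"
      and q0: "\<And>a b. q0 a b = enn2real (g0 (a, b)) / enn2real (h0 a)"
      using c0[OF tau2] unfolding cond_density_def by blast
    obtain g1 h1 where g1: "distributed (data_H1 n T mu S z tau) (lborel \<Otimes>\<^sub>M lborel) (\<lambda>X. (muhat n X (tau - 1), muhat n X tau)) g1"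
      and h1: "distributed (data_H1 n T mu S z tau) lborel (\<lambda>X. muhat n X (tau - 1)) h1"
      and q1: "\<And>a b. q1 a b = enn2real (g1 (a, b)) / enn2real (h1 a)"
      using c1[OF tau2] unfolding cond_density_def by blast
    have t1: "tau - 1 \<in> {1..T}" "tau \<in> {1..T}" using tau tau2 by auto
    have V: "(\<lambda>m. (m (tau - 1), m tau)) \<in> measurable EE (lborel \<Otimes>\<^sub>M (lborel :: (real^'d) measure))"
      by (intro measurable_Pair measurable_component_singleton) (use t1 in auto)
    have Pi: "(\<lambda>m. m (tau - 1)) \<in> measurable EE (lborel :: (real^'d) measure)"
      by (rule measurable_component_singleton) (use t1 in auto)
    have e1: "(\<lambda>X::nat\<times>nat\<Rightarrow>real^'d. (muhat n X (tau - 1), muhat n X tau)) = (\<lambda>X. (\<lambda>m. (m (tau - 1), m tau)) (muhat_vec n T X))"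
      using muv[OF t1(1)] muv[OF t1(2)] by auto
    have e2: "(\<lambda>X::nat\<times>nat\<Rightarrow>real^'d. muhat n X (tau - 1)) = (\<lambda>X. (\<lambda>m. m (tau - 1)) (muhat_vec n T X))"
      using muv[OF t1(1)] by auto
    have g0eq: "distr (density EE ?F0) (lborel \<Otimes>\<^sub>M lborel) (\<lambda>m. (m (tau - 1), m tau)) = density (lborel \<Otimes>\<^sub>M lborel) g0"
      using g0 LV0[OF V] unfolding distributed_def e1 by simp
    have g1eq: "distr (density EE ?F1) (lborel \<Otimes>\<^sub>M lborel) (\<lambda>m. (m (tau - 1), m tau)) = density (lborel \<Otimes>\<^sub>M lborel) g1"
      using g1 LV1[OF V] unfolding distributed_def e1 by simp
    have h0eq: "distr (density EE ?F0) lborel (\<lambda>m. m (tau - 1)) = density lborel h0"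
      using h0 LV0[OF Pi] unfolding distributed_def e2 by simp
    have h0m[measurable]: "h0 \<in> borel_measurable lborel" and h1m[measurable]: "h1 \<in> borel_measurable lborel"
      using h0 h1 unfolding distributed_def by auto
    have "density lborel h1 = density lborel h0"
      using h0 h1 Hmarg[of "tau - 1"] tau2 unfolding distributed_def by simp
    then have "AE a in lborel. h1 a = h0 a"
      by (rule sigma_finite_measure.density_unique[OF lborel.sigma_finite_measure_axioms h1m h0m])
    then have H1: "AE m in EE. h1 (m (tau - 1)) = h0 (m (tau - 1))"
      by (intro TR[OF F0_meas _ Pi h0m h0eq] TR_W[OF h0m]) (simp_all add: F0_pos)
    have H2: "AE m in EE. 0 < h0 (m (tau - 1))"
      by (intro TR[OF F0_meas _ Pi h0m h0eq]) (simp_all add: F0_pos AE_density)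
    have "AE a in lborel. h0 a \<noteq> \<infinity>" by (rule TR_fin[OF F0_meas Q0_fin Pi h0m h0eq])
    then have H3: "AE m in EE. h0 (m (tau - 1)) \<noteq> \<infinity>"
      by (intro TR[OF F0_meas _ Pi h0m h0eq] TR_W[OF h0m]) (simp_all add: F0_pos)
    have AE: "AE m in EE. f0 m = ?F0 m \<and> f1 m = ?F0 m * rho (yv n tau m) \<and> 0 < ?F0 m \<and> ?F0 m < \<infinity> \<and>
            g1 (m (tau - 1), m tau) = g0 (m (tau - 1), m tau) * rho (yv n tau m) \<and> 0 < g0 (m (tau - 1), m tau) \<and> g0 (m (tau - 1), m tau) < \<infinity>"
    proof -
      have g0m: "g0 \<in> borel_measurable (lborel \<Otimes>\<^sub>M lborel)" and g1m: "g1 \<in> borel_measurable (lborel \<Otimes>\<^sub>M lborel)"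
        using g0 g1 unfolding distributed_def by auto
      have wwm: "(\<lambda>(a, b). (real n * real tau) *\<^sub>R b - (real n * real (tau - 1)) *\<^sub>R a) \<in> borel_measurable (lborel \<Otimes>\<^sub>M (lborel :: (real^'d) measure))"
        by (simp add: split_beta')
      have ywV: "yv n tau m = (\<lambda>(a, b). (real n * real tau) *\<^sub>R b - (real n * real (tau - 1)) *\<^sub>R a) (m (tau - 1), m tau)" for m :: "nat \<Rightarrow> real^'d"
        unfolding yv_def by simp
      have sfW: "sigma_finite_measure (lborel \<Otimes>\<^sub>M (lborel :: (real^'d) measure))"
        by (intro sigma_finite_pair_measure lborel.sigma_finite_measure_axioms)
      show ?thesis
        by (rule FIN[OF EE_sf sfW F0_meas F0_pos Q0_fin F1_meas F1eq rho_meas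
            V wwm ywV f0eq f0m f1eq f1m g0eq g0m g1eq g1m])
    qed
    show ?thesis using AE H1 H2 H3
    proof (eventually_elim)
      case (elim x)
      then have e: "f0 x = ?F0 x" "f1 x = ?F0 x * rho (yv n tau x)"
        "g1 (x (tau - 1), x tau) = g0 (x (tau - 1), x tau) * rho (yv n tau x)"
        "h1 (x (tau - 1)) = h0 (x (tau - 1))" by auto
      from elim have p1: "0 < enn2real (?F0 x)" and p2: "0 < enn2real (g0 (x (tau - 1), x tau))"
        and p3: "0 < enn2real (h0 (x (tau - 1)))" by (auto simp: enn2real_positive_iff less_top)
      show "enn2real (f1 x) / enn2real (f0 x) = q1 (x (tau - 1)) (x tau) / q0 (x (tau - 1)) (x tau)"
        unfolding q0 q1 e enn2real_mult using p1 p2 p3 by (simp add: field_simps)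
    qed
  qed
qed

end

theorem lemma3p2:
  fixes T n tau :: nat and mu z :: "real^'d" and S :: "real^'d^'d"
    and f0 f1 :: "(nat \<Rightarrow> real^'d) \<Rightarrow> ennreal"
    and q0 q1 :: "real^'d \<Rightarrow> real^'d \<Rightarrow> real"
  assumes "T \<ge> 1" and "n \<ge> 2" and "pos_def_mat S" and "tau \<in> {1..T}"
    and "distributed (data_H0 n T mu S) (PiM {1..T} (\<lambda>_. lborel)) (muhat_vec n T) f0"
    and "distributed (data_H1 n T mu S z tau) (PiM {1..T} (\<lambda>_. lborel)) (muhat_vec n T) f1"
    and "tau = 1 \<Longrightarrow> marg_as_cond_density (data_H0 n T mu S) (\<lambda>X. muhat n X 1) q0"
    and "tau = 1 \<Longrightarrow> marg_as_cond_density (data_H1 n T mu S z tau) (\<lambda>X. muhat n X 1) q1"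
    and "tau \<ge> 2 \<Longrightarrow> cond_density (data_H0 n T mu S)
           (\<lambda>X. muhat n X (tau - 1)) (\<lambda>X. muhat n X tau) q0"
    and "tau \<ge> 2 \<Longrightarrow> cond_density (data_H1 n T mu S z tau)
           (\<lambda>X. muhat n X (tau - 1)) (\<lambda>X. muhat n X tau) q1"
  shows "AE x in PiM {1..T} (\<lambda>_. lborel).
           enn2real (f1 x) / enn2real (f0 x)
             = q1 (x (tau - 1)) (x tau) / q0 (x (tau - 1)) (x tau)"
    by (rule main[OF assms(3) assms(2) assms(1) assms(4) assms(5-10)])

end
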